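(* Let $r\in\mathbb Z_m$, $k\ge1$, and $T_r=\mathrm{Id}_n+X_rY_r$, regarded as the $nm\times nm$ block matrix with $T_r$ in block $(r,r)$ and zeros elsewhere. For any initial condition $(X(0),Y(0),V_{s,\alpha}(0),W_{s,\alpha}(0))\in\mathcal M^\bullet$, the flow at time $t$ of the Hamiltonian vector field $f\mapsto\{\tfrac1k\operatorname{tr}(T_r^k),f\}$ is $X(t)=\exp(-tT_r(0)^k)X(0)$, $Y(t)=Y(0)\exp(tT_r(0)^k)$, $V_{s,\alpha}(t)=V_{s,\alpha}(0)$, $W_{s,\alpha}(t)=W_{s,\alpha}(0)$, where $T_r(0)=\mathrm{Id}_n+X_r(0)Y_r(0)$ (in block $(r,r)$).
   Context: Fix integers $m\ge2$, $n\ge1$ and $\mathbf d=(d_0,\dots,d_{m-1})\in\mathbb N^m$ with $d_0\ge1$. Indices $r,s$ range over $\mathbb Z_m$, identified with $\{0,\dots,m-1\}$ with its usual order; Kronecker deltas of such indices are taken modulo $m$. A spin index is a pair $(s,\alpha)$ with $s\in\mathbb Z_m$, $1\le\alpha\le d_s$. $\mathcal M^\bullet$ is the smooth affine variety of tuples $(X_s,Y_s,V_{s,\alpha},W_{s,\alpha})$, $X_s,Y_s\in\mathrm{Mat}(n\times n,\mathbb C)$, $V_{s,\alpha}\in\mathrm{Mat}(1\times n,\mathbb C)$, $W_{s,\alpha}\in\mathrm{Mat}(n\times1,\mathbb C)$, with $\mathrm{Id}_n+X_sY_s$, $\mathrm{Id}_n+Y_sX_s$, $\mathrm{Id}_n+W_{s,\alpha}V_{s,\alpha}$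 invertible and $1+V_{s,\alpha}W_{s,\alpha}\ne0$. $X=\sum_sX_s$ is the $nm\times nm$ block matrix whose only nonzero $n\times n$ blocks are $X_s$ in block position $(s,s+1)$; $Y=\sum_sY_s$ has $Y_s$ in block position $(s+1,s)$. For a function $F$, the Hamiltonian vector field is $f\mapsto\{F,f\}$ and its flow solves $\frac{d}{dt}f=\{F,f\}$ entrywise. The quasi-Poisson bracket $\{-,-\}$ on $\mathcal M^\bullet$ is the antisymmetric biderivation given on entry functions by ($o(s,r)=\operatorname{sgn}(r-s)$ computed in $\{0,\dots,m-1\}$, $o(\alpha,\beta)=\operatorname{sgn}(\beta-\alpha)$): $\{(X_r)_{ij},(X_s)_{kl}\}=\tfrac12\delta_{s,r-1}(X_{r-1}X_r)_{kj}\delta_{il}-\tfrac12\delta_{s,r+1}\delta_{kj}(X_rX_{r+1})_{il}$; $\{(Y_r)_{ij},(Y_s)_{kl}\}=\tfrac12\delta_{s,r-1}\delta_{kj}(Y_rY_{r-1})_{il}-\tfrac12\delta_{s,r+1}(Y_{r+1}Y_r)_{kj}\delta_{il}$; $\{(X_r)_{ij},(Y_s)_{kl}\}=\delta_{sr}\big(\delta_{kj}\delta_{il}+\tfrac12(Y_rX_r)_{kj}\delta_{il}+\tfrac12\delta_{kj}(X_rY_r)_{il}\big)-\tfrac12\delta_{s,r-1}(X_r)_{kj}(Y_{r-1})_{il}+\tfrac12\delta_{s,r+1}(Y_{r+1})_{kj}(X_r)_{il}$; $\{(X_r)_{ij},(W_{s,\alpha})_k\}=\tfrac12\delta_{s,r+1}\delta_{kj}(X_rW_{r+1,\alpha})_i-\tfrac12\delta_{rs}(X_r)_{kj}(W_{r,\alpha})_i$;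 $\{(X_r)_{ij},(V_{s,\alpha})_l\}=\tfrac12\delta_{rs}(V_{r,\alpha}X_r)_j\delta_{il}-\tfrac12\delta_{s,r+1}(V_{r+1,\alpha})_j(X_r)_{il}$; $\{(Y_r)_{ij},(W_{s,\alpha})_k\}=\tfrac12\delta_{rs}\delta_{kj}(Y_rW_{r,\alpha})_i-\tfrac12\delta_{s,r+1}(Y_r)_{kj}(W_{r+1,\alpha})_i$; $\{(Y_r)_{ij},(V_{s,\alpha})_l\}=\tfrac12\delta_{s,r+1}(V_{r+1,\alpha}Y_r)_j\delta_{il}-\tfrac12\delta_{rs}(V_{r,\alpha})_j(Y_r)_{il}$; $\{(V_{s,\alpha})_j,(V_{r,\beta})_l\}=-\tfrac12o(s,r)(V_{s,\alpha})_j(V_{r,\beta})_l-\tfrac12\delta_{sr}o(\alpha,\beta)\big((V_{r,\beta})_j(V_{s,\alpha})_l+(V_{s,\alpha})_j(V_{r,\beta})_l\big)$; $\{(W_{s,\alpha})_i,(W_{r,\beta})_k\}=-\tfrac12o(s,r)(W_{r,\beta})_k(W_{s,\alpha})_i-\tfrac12\delta_{sr}o(\alpha,\beta)\big((W_{r,\beta})_k(W_{s,\alpha})_i+(W_{s,\alpha})_k(W_{r,\beta})_i\big)$; $\{(V_{s,\alpha})_j,(W_{r,\beta})_k\}=\tfrac12o(s,r)(W_{r,\beta})_k(V_{s,\alpha})_j+\delta_{sr}\delta_{\alpha\beta}\big(\delta_{kj}+\tfrac12(W_{r,\beta})_k(V_{s,\alpha})_j+\tfrac12\delta_{kj}V_{s,\alpha}W_{r,\beta}\big)+\tfrac12\delta_{sr}o(\alpha,\beta)\big(\delta_{kj}V_{s,\alpha}W_{r,\beta}+(W_{r,\beta})_k(V_{s,\alpha})_j\big)$.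 *)

theory Defs
  imports "HOL-Analysis.Analysis"
begin

text \<open>A point of the ambient affine space is a function from coordinate labels to complex
numbers.  CX s i j is the entry (i,j) of X_s, CY s i j the entry (i,j) of Y_s,
CV s a j the j-th entry of the row vector V_{s,a}, CW s a i the i-th entry of the column
vector W_{s,a}.  Indices s range over 0..m-1, matrix indices over 0..n-1 and spin labels a
over 1..d s.\<close>

datatype coord = CX nat nat nat | CY nat nat nat | CV nat nat nat | CW nat nat nat

type_synonym point = "coord \<Rightarrow> complex"

definition coords :: "nat \<Rightarrow> nat \<Rightarrow> (nat \<Rightarrow> nat) \<Rightarrow> coord set" where
  "coords m n d =
     {CX s i j | s i j. s < m \<and> i < n \<and> j < n} \<union>
     {CY s i j | s i j. s < m \<and> i < n \<and> j < n} \<union>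
     {CV s a j | s a j. s < m \<and> 1 \<le> a \<and> a \<le> d s \<and> j < n} \<union>
     {CW s a i | s a i. s < m \<and> 1 \<le> a \<and> a \<le> d s \<and> i < n}"

definition mmul :: "nat \<Rightarrow> (nat \<Rightarrow> nat \<Rightarrow> complex) \<Rightarrow> (nat \<Rightarrow> nat \<Rightarrow> complex) \<Rightarrow> nat \<Rightarrow> nat \<Rightarrow> complex" where
  "mmul N A B i j = (\<Sum>l<N. A i l * B l j)"

definition mid :: "nat \<Rightarrow> nat \<Rightarrow> complex" where
  "mid i j = (if i = j then 1 else 0)"

primrec mpow :: "nat \<Rightarrow> (nat \<Rightarrow> nat \<Rightarrow> complex) \<Rightarrow> nat \<Rightarrow> nat \<Rightarrow> nat \<Rightarrow> complex" where
  "mpow N A 0 = mid"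
| "mpow N A (Suc q) = mmul N A (mpow N A q)"

definition mexp :: "nat \<Rightarrow> (nat \<Rightarrow> nat \<Rightarrow> complex) \<Rightarrow> nat \<Rightarrow> nat \<Rightarrow> complex" where
  "mexp N A i j = (\<Sum>q. mpow N A q i j / of_nat (fact q))"

definition minvertible :: "nat \<Rightarrow> (nat \<Rightarrow> nat \<Rightarrow> complex) \<Rightarrow> bool" where
  "minvertible N A \<longleftrightarrow> (\<exists>B. \<forall>i<N. \<forall>j<N. mmul N A B i j = mid i j \<and> mmul N B A i j = mid i j)"

definition MX :: "point \<Rightarrow> nat \<Rightarrow> nat \<Rightarrow> nat \<Rightarrow> complex" where "MX p s i j = p (CX s i j)"
definition MY :: "point \<Rightarrow> nat \<Rightarrow> nat \<Rightarrow> nat \<Rightarrow> complex" where "MY p s i j = p (CY s i j)"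
definition VV :: "point \<Rightarrow> nat \<Rightarrow> nat \<Rightarrow> nat \<Rightarrow> complex" where "VV p s a j = p (CV s a j)"
definition WW :: "point \<Rightarrow> nat \<Rightarrow> nat \<Rightarrow> nat \<Rightarrow> complex" where "WW p s a i = p (CW s a i)"

definition Mbullet :: "nat \<Rightarrow> nat \<Rightarrow> (nat \<Rightarrow> nat) \<Rightarrow> point \<Rightarrow> bool" where
  "Mbullet m n d p \<longleftrightarrow>
     (\<forall>s<m. minvertible n (\<lambda>i j. mid i j + mmul n (MX p s) (MY p s) i j)
          \<and> minvertible n (\<lambda>i j. mid i j + mmul n (MY p s) (MX p s) i j)
          \<and> (\<forall>a. 1 \<le> a \<and> a \<le> d s \<longrightarrow>
                minvertible n (\<lambda>i j. mid i j + WW p s a i * VV p s a j)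
              \<and> 1 + (\<Sum>l<n. VV p s a l * WW p s a l) \<noteq> 0))"

text \<open>Big nm x nm block matrices: global index s*n+i corresponds to block s, entry i.\<close>
definition Xbig :: "nat \<Rightarrow> nat \<Rightarrow> point \<Rightarrow> nat \<Rightarrow> nat \<Rightarrow> complex" where
  "Xbig m n p a b = (if b div n = (a div n + 1) mod m then p (CX (a div n) (a mod n) (b mod n)) else 0)"

definition Ybig :: "nat \<Rightarrow> nat \<Rightarrow> point \<Rightarrow> nat \<Rightarrow> nat \<Rightarrow> complex" where
  "Ybig m n p a b = (if a div n = (b div n + 1) mod m then p (CY (b div n) (a mod n) (b mod n)) else 0)"

definition Tbig :: "nat \<Rightarrow> point \<Rightarrow> nat \<Rightarrow> nat \<Rightarrow> nat \<Rightarrow> complex" where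
  "Tbig n p r a b = (if a div n = r \<and> b div n = r
      then mid (a mod n) (b mod n) + mmul n (MX p r) (MY p r) (a mod n) (b mod n) else 0)"

definition dl :: "nat \<Rightarrow> nat \<Rightarrow> complex" where "dl a b = (if a = b then 1 else 0)"

definition osg :: "nat \<Rightarrow> nat \<Rightarrow> complex" where
  "osg a b = (if a < b then 1 else if a = b then 0 else -1)"

definition sucm :: "nat \<Rightarrow> nat \<Rightarrow> nat" where "sucm m r = (r + 1) mod m"
definition predm :: "nat \<Rightarrow> nat \<Rightarrow> nat" where "predm m r = (r + m - 1) mod m"

text \<open>The bracket on the listed ordered pairs of coordinate functions, evaluated at p.
Returns None for the pairs that are obtained by antisymmetry.\<close>
fun brBase :: "nat \<Rightarrow> nat \<Rightarrow> coord \<Rightarrow> coord \<Rightarrow> point \<Rightarrow> complex option" where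
  "brBase m n (CX r i j) (CX s k l) p = Some (
      1/2 * dl s (predm m r) * mmul n (MX p (predm m r)) (MX p r) k j * dl i l
    - 1/2 * dl s (sucm m r) * dl k j * mmul n (MX p r) (MX p (sucm m r)) i l)"
| "brBase m n (CY r i j) (CY s k l) p = Some (
      1/2 * dl s (predm m r) * dl k j * mmul n (MY p r) (MY p (predm m r)) i l
    - 1/2 * dl s (sucm m r) * mmul n (MY p (sucm m r)) (MY p r) k j * dl i l)"
| "brBase m n (CX r i j) (CY s k l) p = Some (
      dl s r * (dl k j * dl i l + 1/2 * mmul n (MY p r) (MX p r) k j * dl i l
                + 1/2 * dl k j * mmul n (MX p r) (MY p r) i l)
    - 1/2 * dl s (predm m r) * MX p r k j * MY p (predm m r) i l
    + 1/2 * dl s (sucm m r) * MY p (sucm m r) k j * MX p r i l)"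
| "brBase m n (CX r i j) (CW s a k) p = Some (
      1/2 * dl s (sucm m r) * dl k j * (\<Sum>q<n. MX p r i q * WW p (sucm m r) a q)
    - 1/2 * dl r s * MX p r k j * WW p r a i)"
| "brBase m n (CX r i j) (CV s a l) p = Some (
      1/2 * dl r s * (\<Sum>q<n. VV p r a q * MX p r q j) * dl i l
    - 1/2 * dl s (sucm m r) * VV p (sucm m r) a j * MX p r i l)"
| "brBase m n (CY r i j) (CW s a k) p = Some (
      1/2 * dl r s * dl k j * (\<Sum>q<n. MY p r i q * WW p r a q)
    - 1/2 * dl s (sucm m r) * MY p r k j * WW p (sucm m r) a i)"
| "brBase m n (CY r i j) (CV s a l) p = Some (
      1/2 * dl s (sucm m r) * (\<Sum>q<n. VV p (sucm m r) a q * MY p r q j) * dl i l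
    - 1/2 * dl r s * VV p r a j * MY p r i l)"
| "brBase m n (CV s a j) (CV r b l) p = Some (
    - 1/2 * osg s r * VV p s a j * VV p r b l
    - 1/2 * dl s r * osg a b * (VV p r b j * VV p s a l + VV p s a j * VV p r b l))"
| "brBase m n (CW s a i) (CW r b k) p = Some (
    - 1/2 * osg s r * WW p r b k * WW p s a i
    - 1/2 * dl s r * osg a b * (WW p r b k * WW p s a i + WW p s a k * WW p r b i))"
| "brBase m n (CV s a j) (CW r b k) p = Some (
      1/2 * osg s r * WW p r b k * VV p s a j
    + dl s r * dl a b * (dl k j + 1/2 * WW p r b k * VV p s a j
                         + 1/2 * dl k j * (\<Sum>q<n. VV p s a q * WW p r b q))
    + 1/2 * dl s r * osg a b * (dl k j * (\<Sum>q<n. VV p s a q * WW p r b q)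
                                + WW p r b k * VV p s a j))"
| "brBase m n _ _ p = None"

definition br :: "nat \<Rightarrow> nat \<Rightarrow> coord \<Rightarrow> coord \<Rightarrow> point \<Rightarrow> complex" where
  "br m n c c' p = (case brBase m n c c' p of Some v \<Rightarrow> v
                    | None \<Rightarrow> (case brBase m n c' c p of Some v \<Rightarrow> - v | None \<Rightarrow> 0))"

definition pdiff :: "coord \<Rightarrow> (point \<Rightarrow> complex) \<Rightarrow> point \<Rightarrow> complex" where
  "pdiff c F p = deriv (\<lambda>z. F (p(c := z))) (p c)"

text \<open>{F, f} for a coordinate function f, via the biderivation property:
 {F, f} = sum over coordinates c of (dF/dc) {c, f}.\<close>
definition ham :: "nat \<Rightarrow> nat \<Rightarrow> (nat \<Rightarrow> nat) \<Rightarrow> (point \<Rightarrow> complex) \<Rightarrow> coord \<Rightarrow> point \<Rightarrow> complex" where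
  "ham m n d F f p = (\<Sum>c\<in>coords m n d. pdiff c F p * br m n c f p)"

definition ham_flow_curve :: "nat \<Rightarrow> nat \<Rightarrow> (nat \<Rightarrow> nat) \<Rightarrow> (point \<Rightarrow> complex) \<Rightarrow> real set \<Rightarrow> (real \<Rightarrow> point) \<Rightarrow> bool" where
  "ham_flow_curve m n d F I \<gamma> \<longleftrightarrow>
     (\<forall>c\<in>coords m n d. \<forall>t\<in>I.
        ((\<lambda>s. \<gamma> s c) has_vector_derivative ham m n d F c (\<gamma> t)) (at t within I))"

definition Fham :: "nat \<Rightarrow> nat \<Rightarrow> nat \<Rightarrow> nat \<Rightarrow> point \<Rightarrow> complex" where
  "Fham m n r k p = (1 / of_nat k) * (\<Sum>a<n*m. mpow (n*m) (Tbig n p r) k a a)"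

end

theory Submission
  imports Defs
begin


lemma mmul_assoc: "mmul N (mmul N A B) C = mmul N A (mmul N B C)"
proof (intro ext)
  fix i j
  show "mmul N (mmul N A B) C i j = mmul N A (mmul N B C) i j"
    unfolding mmul_def sum_distrib_left sum_distrib_right mult.assoc
    by (rule sum.swap)
qed

lemma mmul_add_left: "mmul N (\<lambda>i j. A i j + B i j) C i j = mmul N A C i j + mmul N B C i j"
  unfolding mmul_def by (simp add: distrib_right sum.distrib)

lemma mmul_add_right: "mmul N A (\<lambda>i j. B i j + C i j) i j = mmul N A B i j + mmul N A C i j"
  unfolding mmul_def by (simp add: distrib_left sum.distrib)

lemma mmul_scal_left: "mmul N (\<lambda>i j. c * A i j) B i j = c * mmul N A B i j"
  unfolding mmul_def by (simp add: sum_distrib_left mult.assoc)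

lemma mmul_scal_right: "mmul N A (\<lambda>i j. c * B i j) i j = c * mmul N A B i j"
  unfolding mmul_def by (simp add: sum_distrib_left mult.left_commute)

lemma mmul_neg_left: "mmul N (\<lambda>i j. - A i j) B i j = - mmul N A B i j"
  unfolding mmul_def by (simp add: sum_negf)

lemma mmul_mid_left: "i < N \<Longrightarrow> mmul N mid B i j = B i j"
proof -
  assume "i < N"
  have "mmul N mid B i j = (\<Sum>l<N. if l = i then B l j else 0)"
    unfolding mmul_def by (rule sum.cong) (auto simp: mid_def)
  then show ?thesis using \<open>i < N\<close> by simp
qed

lemma mmul_mid_right: "j < N \<Longrightarrow> mmul N A mid i j = A i j"
proof -
  assume "j < N"
  have "mmul N A mid i j = (\<Sum>l<N. if l = j then A i l else 0)"
    unfolding mmul_def by (rule sum.cong) (auto simp: mid_def)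
  then show ?thesis using \<open>j < N\<close> by simp
qed

definition meq :: "nat \<Rightarrow> (nat \<Rightarrow> nat \<Rightarrow> complex) \<Rightarrow> (nat \<Rightarrow> nat \<Rightarrow> complex) \<Rightarrow> bool" where
  "meq N A B \<longleftrightarrow> (\<forall>i<N. \<forall>j<N. A i j = B i j)"

lemma mmul_cong_right: "(\<And>l. l < N \<Longrightarrow> B l j = B' l j) \<Longrightarrow> mmul N A B i j = mmul N A B' i j"
  unfolding mmul_def by simp

lemma mmul_cong_left: "(\<And>l. l < N \<Longrightarrow> A i l = A' i l) \<Longrightarrow> mmul N A B i j = mmul N A' B i j"
  unfolding mmul_def by simp

lemma mmul_meq: "meq N A A' \<Longrightarrow> meq N B B' \<Longrightarrow> i < N \<Longrightarrow> j < N \<Longrightarrow> mmul N A B i j = mmul N A' B' i j"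
  unfolding mmul_def meq_def by simp

lemma meq_refl[simp]: "meq N A A" by (simp add: meq_def)

definition mcomm :: "nat \<Rightarrow> (nat \<Rightarrow> nat \<Rightarrow> complex) \<Rightarrow> (nat \<Rightarrow> nat \<Rightarrow> complex) \<Rightarrow> bool" where
  "mcomm N A C \<longleftrightarrow> meq N (mmul N A C) (mmul N C A)"

lemma mpow_Suc_right: "i < N \<Longrightarrow> j < N \<Longrightarrow> mpow N A (Suc q) i j = mmul N (mpow N A q) A i j"
proof (induction q arbitrary: i j)
  case 0 then show ?case by (simp add: mmul_mid_left mmul_mid_right)
next
  case (Suc q)
  have "mpow N A (Suc (Suc q)) i j = mmul N A (mpow N A (Suc q)) i j" by simp
  also have "\<dots> = mmul N A (mmul N (mpow N A q) A) i j"
    by (rule mmul_cong_right) (use Suc in auto)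
  also have "\<dots> = mmul N (mpow N A (Suc q)) A i j" by (simp add: mmul_assoc)
  finally show ?case .
qed

lemma mcomm_mpow: assumes "mcomm N A C" shows "mcomm N (mpow N A q) C"
proof (induction q)
  case 0 then show ?case by (simp add: mcomm_def meq_def mmul_mid_left mmul_mid_right)
next
  case (Suc q)
  show ?case unfolding mcomm_def meq_def
  proof (intro allI impI)
    fix i j assume ij: "i < N" "j < N"
    have "mmul N (mpow N A (Suc q)) C i j = mmul N A (mmul N (mpow N A q) C) i j" by (simp add: mmul_assoc)
    also have "\<dots> = mmul N A (mmul N C (mpow N A q)) i j"
      by (rule mmul_cong_right) (use Suc ij in \<open>auto simp: mcomm_def meq_def\<close>)
    also have "\<dots> = mmul N (mmul N A C) (mpow N A q) i j" by (simp add: mmul_assoc)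
    also have "\<dots> = mmul N (mmul N C A) (mpow N A q) i j"
      by (rule mmul_cong_left) (use assms ij in \<open>auto simp: mcomm_def meq_def\<close>)
    also have "\<dots> = mmul N C (mpow N A (Suc q)) i j" by (simp add: mmul_assoc)
    finally show "mmul N (mpow N A (Suc q)) C i j = mmul N C (mpow N A (Suc q)) i j" .
  qed
qed

lemma mcomm_sym: "mcomm N A C \<Longrightarrow> mcomm N C A" by (auto simp: mcomm_def meq_def)

lemma mcomm_self: "mcomm N A A" by (simp add: mcomm_def)

lemma mcomm_id_plus: "mcomm N (\<lambda>i j. mid i j + A i j) A"
  by (auto simp: mcomm_def meq_def mmul_add_left mmul_add_right mmul_mid_left mmul_mid_right)

lemma mpow_scal: "mpow N (\<lambda>i j. c * A i j) q i j = c ^ q * mpow N A q i j"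
proof (induction q arbitrary: i j)
  case 0 then show ?case by simp
next
  case (Suc q)
  have "mpow N (\<lambda>i j. c * A i j) (Suc q) i j = mmul N (\<lambda>i j. c * A i j) (mpow N (\<lambda>i j. c * A i j) q) i j"
    by simp
  also have "\<dots> = mmul N (\<lambda>i j. c * A i j) (\<lambda>i j. c^q * mpow N A q i j) i j"
    by (rule mmul_cong_right) (rule Suc)
  also have "\<dots> = c * (c^q * mmul N A (mpow N A q) i j)"
    by (simp only: mmul_scal_left mmul_scal_right)
  finally show ?case by simp
qed

lemma mpow_zero_mat: "mpow N (\<lambda>i j. 0) (Suc q) i j = 0"
  by (simp add: mmul_def)



definition blk :: "nat \<Rightarrow> nat \<Rightarrow> (nat \<Rightarrow> nat \<Rightarrow> complex) \<Rightarrow> nat \<Rightarrow> nat \<Rightarrow> complex" where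
  "blk n r D a b = (if a div n = r \<and> b div n = r then D (a mod n) (b mod n) else 0)"

lemma sum_block:
  fixes f :: "nat \<Rightarrow> complex"
  assumes "r < m" "0 < n"
  shows "(\<Sum>l<n*m. if l div n = r then f l else 0) = (\<Sum>l<n. f (r*n+l))"
proof -
  have S: "{l \<in> {..<n*m}. l div n = r} = (\<lambda>l. r*n+l) ` {..<n}"
  proof
    show "{l \<in> {..<n*m}. l div n = r} \<subseteq> (\<lambda>l. r*n+l) ` {..<n}"
    proof
      fix l assume "l \<in> {l \<in> {..<n*m}. l div n = r}"
      then have "l div n = r" by simp
      then have "l = r*n + l mod n" by (metis div_mult_mod_eq mult.commute)
      moreover have "l mod n < n" using assms by simp
      ultimately show "l \<in> (\<lambda>l. r*n+l) ` {..<n}" by blast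
    qed
    show "(\<lambda>l. r*n+l) ` {..<n} \<subseteq> {l \<in> {..<n*m}. l div n = r}"
    proof
      fix x assume "x \<in> (\<lambda>l. r*n+l) ` {..<n}"
      then obtain l where l: "l < n" "x = r*n+l" by auto
      have "r*n + l < r*n + n" using l by simp
      also have "\<dots> = (r+1)*n" by simp
      also have "\<dots> \<le> m*n" using assms by (intro mult_right_mono) auto
      finally have "x < n*m" using l by (simp add: mult.commute)
      moreover have "x div n = r" using l assms by simp
      ultimately show "x \<in> {l \<in> {..<n*m}. l div n = r}" by simp
    qed
  qed
  have "(\<Sum>l<n*m. if l div n = r then f l else 0) = sum f {l \<in> {..<n*m}. l div n = r}"
    using sum.inter_filter[of "{..<n*m}" f "\<lambda>l. l div n = r"] by simp
  also have "\<dots> = sum f ((\<lambda>l. r*n+l) ` {..<n})" by (simp only: S)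
  also have "\<dots> = (\<Sum>l<n. f (r*n+l))" by (subst sum.reindex) (auto simp: inj_on_def)
  finally show ?thesis .
qed

lemma rn_div[simp]: "(l::nat) < n \<Longrightarrow> (r*n+l) div n = r"
proof -
  assume l: "l < n"
  then have n: "n \<noteq> 0" by simp
  have "(r*n+l) div n = (l + r*n) div n" by (simp only: add.commute)
  also have "\<dots> = r + l div n" using n by (rule div_mult_self1)
  also have "l div n = 0" using l by (rule div_less)
  finally show ?thesis by simp
qed
lemma rn_mod[simp]: "(l::nat) < n \<Longrightarrow> (r*n+l) mod n = l"
proof -
  assume l: "l < n"
  have "(r*n+l) mod n = (l + r*n) mod n" by (simp only: add.commute)
  also have "\<dots> = l mod n" by (rule mod_mult_self1)
  also have "\<dots> = l" using l by (rule mod_less)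
  finally show ?thesis .
qed
lemma rn_eq_iff: "(l::nat) < n \<Longrightarrow> (r*n+l = b) = (b div n = r \<and> l = b mod n)"
proof
  assume "l < n" "r*n+l = b" then show "b div n = r \<and> l = b mod n" using rn_div rn_mod by auto
next
  assume "l < n" "b div n = r \<and> l = b mod n"
  then show "r*n+l = b" by (metis div_mult_mod_eq mult.commute)
qed

lemma mmul_blk_left:
  assumes "r < m" "0 < n"
  shows "mmul (n*m) (blk n r D) B a b = (if a div n = r then (\<Sum>l<n. D (a mod n) l * B (r*n+l) b) else 0)"
proof (cases "a div n = r")
  case True
  have "mmul (n*m) (blk n r D) B a b = (\<Sum>l<n*m. if l div n = r then D (a mod n) (l mod n) * B l b else 0)"
    unfolding mmul_def blk_def using True by (intro sum.cong) auto
  also have "\<dots> = (\<Sum>l<n. D (a mod n) l * B (r*n+l) b)"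
    by (subst sum_block[OF assms]) simp
  finally show ?thesis using True by simp
next
  case False then show ?thesis by (simp add: mmul_def blk_def)
qed

lemma mmul_blk_right:
  assumes "r < m" "0 < n"
  shows "mmul (n*m) A (blk n r D) a b = (if b div n = r then (\<Sum>l<n. A a (r*n+l) * D l (b mod n)) else 0)"
proof (cases "b div n = r")
  case True
  have "mmul (n*m) A (blk n r D) a b = (\<Sum>l<n*m. if l div n = r then A a l * D (l mod n) (b mod n) else 0)"
    unfolding mmul_def blk_def using True by (intro sum.cong) auto
  also have "\<dots> = (\<Sum>l<n. A a (r*n+l) * D l (b mod n))"
    by (subst sum_block[OF assms]) simp
  finally show ?thesis using True by simp
next
  case False then show ?thesis by (simp add: mmul_def blk_def)
qed

lemma mmul_blk_blk:
  assumes "r < m" "0 < n"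
  shows "mmul (n*m) (blk n r D) (blk n r E) = blk n r (mmul n D E)"
proof (intro ext)
  fix a b
  show "mmul (n*m) (blk n r D) (blk n r E) a b = blk n r (mmul n D E) a b"
    unfolding mmul_blk_left[OF assms]
    by (auto simp: blk_def mmul_def intro!: sum.cong)
qed

lemma mpow_blk:
  assumes "r < m" "0 < n" "q \<ge> 1"
  shows "mpow (n*m) (blk n r D) q = blk n r (mpow n D q)"
  using assms(3)
proof (induction q)
  case 0 then show ?case by simp
next
  case (Suc q)
  show ?case
  proof (cases "q = 0")
    case True
    show ?thesis
    proof (intro ext)
      fix a b
      have "mpow (n*m) (blk n r D) (Suc q) a b = mmul (n*m) (blk n r D) mid a b" using True by simp
      also have "\<dots> = blk n r D a b"
      proof (cases "a div n = r \<and> b div n = r")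
        case True
        have "(\<Sum>l<n. D (a mod n) l * mid (r*n+l) b) = (\<Sum>l<n. if l = b mod n then D (a mod n) l else 0)"
          by (rule sum.cong) (use True in \<open>auto simp: mid_def rn_eq_iff\<close>)
        then show ?thesis using True assms(2) by (simp add: blk_def mmul_blk_left[OF assms(1,2)])
      next
        case False
        have "(\<Sum>l<n. D (a mod n) l * mid (r*n+l) b) = 0" if "a div n = r"
          by (rule sum.neutral) (use False that in \<open>auto simp: mid_def rn_eq_iff\<close>)
        then show ?thesis using False by (auto simp: blk_def mmul_blk_left[OF assms(1,2)])
      qed
      also have "\<dots> = blk n r (mpow n D (Suc q)) a b"
        using True assms(2) by (simp add: blk_def mmul_mid_right)
      finally show "mpow (n*m) (blk n r D) (Suc q) a b = blk n r (mpow n D (Suc q)) a b" .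
    qed
  next
    case False
    then have "mpow (n*m) (blk n r D) q = blk n r (mpow n D q)" using Suc by simp
    then show ?thesis by (simp add: mmul_blk_blk[OF assms(1,2)])
  qed
qed

lemma trace_blk:
  assumes "r < m" "0 < n"
  shows "(\<Sum>a<n*m. blk n r E a a) = (\<Sum>l<n. E l l)"
proof -
  have "(\<Sum>a<n*m. blk n r E a a) = (\<Sum>a<n*m. if a div n = r then E (a mod n) (a mod n) else 0)"
    by (simp add: blk_def)
  also have "\<dots> = (\<Sum>l<n. E l l)" by (subst sum_block[OF assms]) simp
  finally show ?thesis .
qed

definition Tm :: "nat \<Rightarrow> nat \<Rightarrow> point \<Rightarrow> nat \<Rightarrow> nat \<Rightarrow> complex" where
  "Tm n r p i j = mid i j + mmul n (MX p r) (MY p r) i j"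

lemma Tbig_blk: "Tbig n p r = blk n r (Tm n r p)"
  by (intro ext) (simp add: Tbig_def blk_def Tm_def)

lemma Fham_eq:
  assumes "r < m" "0 < n" "k \<ge> 1"
  shows "Fham m n r k p = (1 / of_nat k) * (\<Sum>l<n. mpow n (Tm n r p) k l l)"
  unfolding Fham_def Tbig_blk mpow_blk[OF assms] trace_blk[OF assms(1,2)] ..

lemma scal_blk: "(\<lambda>i j. c * blk n r D i j) = blk n r (\<lambda>i j. c * D i j)"
  by (intro ext) (simp add: blk_def)

lemma mexp_blk:
  assumes "r < m" "0 < n"
  shows "mexp (n*m) (blk n r D) a b = (if a div n = r \<and> b div n = r then mexp n D (a mod n) (b mod n) else mid a b)"
proof (cases "a div n = r \<and> b div n = r")
  case True
  have "mpow (n*m) (blk n r D) q a b = mpow n D q (a mod n) (b mod n)" for q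
  proof (cases "q = 0")
    case True
    have "(a = b) = (a mod n = b mod n)" using \<open>a div n = r \<and> b div n = r\<close>
      by (metis div_mult_mod_eq)
    then show ?thesis using True by (simp add: mid_def)
  next
    case False
    then show ?thesis using mpow_blk[OF assms, of q D] \<open>a div n = r \<and> b div n = r\<close> by (simp add: blk_def)
  qed
  then show ?thesis using True by (simp add: mexp_def)
next
  case False
  have "mpow (n*m) (blk n r D) q a b / of_nat (fact q) = (if q = 0 then mid a b else 0)" for q
  proof (cases "q = 0")
    case True then show ?thesis by simp
  next
    case False
    then show ?thesis using mpow_blk[OF assms, of q D] \<open>\<not> (a div n = r \<and> b div n = r)\<close> by (auto simp: blk_def)
  qed
  then have "mexp (n*m) (blk n r D) a b = (\<Sum>q. if q = 0 then mid a b else 0)" by (simp add: mexp_def)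
  also have "\<dots> = mid a b" using sums_single[of 0 "\<lambda>_. mid a b"] by (simp add: sums_iff)
  finally show ?thesis by (simp only: if_not_P[OF False])
qed

lemma mmul_E_X:
  assumes "r < m" "0 < n" "a < n*m"
  shows "mmul (n*m) (\<lambda>a l. if a div n = r \<and> l div n = r then G (a mod n) (l mod n) else mid a l) (Xbig m n p) a b
       = (if a div n = r then (if b div n = (r+1) mod m then mmul n G (MX p r) (a mod n) (b mod n) else 0)
          else Xbig m n p a b)"
proof (cases "a div n = r")
  case True
  have E: "(\<lambda>a l. if a div n = r \<and> l div n = r then G (a mod n) (l mod n) else mid a l) a = blk n r G a"
    using True by (auto simp: blk_def mid_def fun_eq_iff)
  have "mmul (n*m) (\<lambda>a l. if a div n = r \<and> l div n = r then G (a mod n) (l mod n) else mid a l) (Xbig m n p) a b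
      = mmul (n*m) (blk n r G) (Xbig m n p) a b"
    by (rule mmul_cong_left) (use True in \<open>auto simp: blk_def mid_def\<close>)
  also have "\<dots> = (\<Sum>l<n. G (a mod n) l * Xbig m n p (r*n+l) b)"
    using True by (simp add: mmul_blk_left[OF assms(1,2)])
  also have "\<dots> = (if b div n = (r+1) mod m then mmul n G (MX p r) (a mod n) (b mod n) else 0)"
    by (auto simp: Xbig_def mmul_def MX_def intro!: sum.cong)
  finally show ?thesis using True by simp
next
  case False
  have "mmul (n*m) (\<lambda>a l. if a div n = r \<and> l div n = r then G (a mod n) (l mod n) else mid a l) (Xbig m n p) a b
      = mmul (n*m) mid (Xbig m n p) a b"
    by (rule mmul_cong_left) (use False in simp)
  also have "\<dots> = Xbig m n p a b" using assms(3) by (simp add: mmul_mid_left)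
  finally show ?thesis using False by simp
qed

lemma mmul_Y_E:
  assumes "r < m" "0 < n" "b < n*m"
  shows "mmul (n*m) (Ybig m n p) (\<lambda>l b. if l div n = r \<and> b div n = r then G (l mod n) (b mod n) else mid l b) a b
       = (if b div n = r then (if a div n = (r+1) mod m then mmul n (MY p r) G (a mod n) (b mod n) else 0)
          else Ybig m n p a b)"
proof (cases "b div n = r")
  case True
  have E: "\<And>l. (if l div n = r \<and> b div n = r then G (l mod n) (b mod n) else mid l b) = blk n r G l b"
    using True by (auto simp: blk_def mid_def)
  have "mmul (n*m) (Ybig m n p) (\<lambda>l b. if l div n = r \<and> b div n = r then G (l mod n) (b mod n) else mid l b) a b
      = mmul (n*m) (Ybig m n p) (blk n r G) a b"
    by (rule mmul_cong_right) (use True in \<open>auto simp: blk_def mid_def\<close>)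
  also have "\<dots> = (\<Sum>l<n. Ybig m n p a (r*n+l) * G l (b mod n))"
    using True by (simp add: mmul_blk_right[OF assms(1,2)])
  also have "\<dots> = (if a div n = (r+1) mod m then mmul n (MY p r) G (a mod n) (b mod n) else 0)"
    by (auto simp: Ybig_def mmul_def MY_def intro!: sum.cong)
  finally show ?thesis using True by simp
next
  case False
  have "mmul (n*m) (Ybig m n p) (\<lambda>l b. if l div n = r \<and> b div n = r then G (l mod n) (b mod n) else mid l b) a b
      = mmul (n*m) (Ybig m n p) mid a b"
    by (rule mmul_cong_right) (use False in simp)
  also have "\<dots> = Ybig m n p a b" using assms(3) by (simp add: mmul_mid_right)
  finally show ?thesis using False by simp
qed



definition mK :: "nat \<Rightarrow> (nat \<Rightarrow> nat \<Rightarrow> complex) \<Rightarrow> real" where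
  "mK N A = 1 + (\<Sum>a<N. \<Sum>b<N. norm (A a b))"

lemma mK_ge1: "mK N A \<ge> 1"
  unfolding mK_def by (simp add: sum_nonneg)

lemma row_le_mK: "i < N \<Longrightarrow> (\<Sum>l<N. norm (A i l)) \<le> mK N A"
proof -
  assume i: "i < N"
  have "(\<Sum>l<N. norm (A i l)) \<le> (\<Sum>a<N. \<Sum>b<N. norm (A a b))"
    using i by (intro member_le_sum[of i "{..<N}" "\<lambda>a. \<Sum>b<N. norm (A a b)"]) (auto intro: sum_nonneg)
  then show ?thesis unfolding mK_def by simp
qed

lemma mpow_bound: "i < N \<Longrightarrow> norm (mpow N A q i j) \<le> mK N A ^ q"
proof (induction q arbitrary: i)
  case 0 then show ?case by (simp add: mid_def)
next
  case (Suc q)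
  have "norm (mpow N A (Suc q) i j) = norm (\<Sum>l<N. A i l * mpow N A q l j)" by (simp add: mmul_def)
  also have "\<dots> \<le> (\<Sum>l<N. norm (A i l) * norm (mpow N A q l j))"
    by (rule order_trans[OF norm_sum]) (simp add: norm_mult)
  also have "\<dots> \<le> (\<Sum>l<N. norm (A i l) * mK N A ^ q)"
    by (intro sum_mono mult_left_mono Suc.IH) auto
  also have "\<dots> = (\<Sum>l<N. norm (A i l)) * mK N A ^ q" by (simp add: sum_distrib_right)
  also have "\<dots> \<le> mK N A * mK N A ^ q"
    using row_le_mK[OF Suc.prems, of A] mK_ge1[of N A] by (intro mult_right_mono) auto
  finally show ?case by simp
qed

lemma ser_summable_norm:
  assumes "i < N"
  shows "summable (\<lambda>q. norm (mpow N A q i j / of_nat (fact q) * z ^ q))"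
proof (rule summable_comparison_test')
  show "summable (\<lambda>q. inverse (fact q) * (mK N A * norm z) ^ q)"
    by (rule summable_exp)
  fix q :: nat
  have "norm (norm (mpow N A q i j / of_nat (fact q) * z ^ q))
      = norm (mpow N A q i j) * inverse (fact q) * norm z ^ q"
    by (simp add: norm_mult norm_divide norm_power divide_inverse norm_inverse)
  also have "\<dots> \<le> mK N A ^ q * inverse (fact q) * norm z ^ q"
    by (intro mult_right_mono mpow_bound assms) auto
  also have "\<dots> = inverse (fact q) * (mK N A * norm z) ^ q" by (simp add: power_mult_distrib)
  finally show "norm (norm (mpow N A q i j / of_nat (fact q) * z ^ q)) \<le> inverse (fact q) * (mK N A * norm z) ^ q" .
qed

lemma ser_summable:
  assumes "i < N"
  shows "summable (\<lambda>q. mpow N A q i j / of_nat (fact q) * z ^ q)"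
  by (rule summable_norm_cancel[OF ser_summable_norm[OF assms]])

lemma mexp_series: "mexp N (\<lambda>a b. z * A a b) i j = (\<Sum>q. mpow N A q i j / of_nat (fact q) * z ^ q)"
  unfolding mexp_def mpow_scal by (simp add: ac_simps)

lemma mmul_series_right:
  fixes f :: "nat \<Rightarrow> nat \<Rightarrow> complex"
  assumes "\<And>l. l < N \<Longrightarrow> summable (\<lambda>q. f q l)"
  shows "(\<Sum>l<N. A l * (\<Sum>q. f q l)) = (\<Sum>q. \<Sum>l<N. A l * f q l)"
proof -
  have "(\<Sum>q. \<Sum>l<N. A l * f q l) = (\<Sum>l<N. \<Sum>q. A l * f q l)"
    by (rule suminf_sum[of "{..<N}" "\<lambda>l q. A l * f q l"]) (use assms in \<open>auto intro: summable_mult\<close>)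
  also have "\<dots> = (\<Sum>l<N. A l * (\<Sum>q. f q l))"
    by (intro sum.cong refl suminf_mult) (use assms in auto)
  finally show ?thesis by simp
qed

lemma mmul_series_left:
  fixes f :: "nat \<Rightarrow> nat \<Rightarrow> complex"
  assumes "\<And>l. l < N \<Longrightarrow> summable (\<lambda>q. f q l)"
  shows "(\<Sum>l<N. (\<Sum>q. f q l) * B l) = (\<Sum>q. \<Sum>l<N. f q l * B l)"
proof -
  have "(\<Sum>q. \<Sum>l<N. f q l * B l) = (\<Sum>l<N. \<Sum>q. f q l * B l)"
    by (rule suminf_sum[of "{..<N}" "\<lambda>l q. f q l * B l"]) (use assms in \<open>auto intro: summable_mult2\<close>)
  also have "\<dots> = (\<Sum>l<N. (\<Sum>q. f q l) * B l)"
    by (intro sum.cong refl suminf_mult2[symmetric]) (use assms in auto)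
  finally show ?thesis by simp
qed

lemma mexp_mmul:
  assumes "i < N"
  shows "mmul N (mexp N (\<lambda>a b. z * A a b)) C i j = (\<Sum>q. mmul N (mpow N A q) C i j / of_nat (fact q) * z ^ q)"
proof -
  have "mmul N (mexp N (\<lambda>a b. z * A a b)) C i j
      = (\<Sum>l<N. (\<Sum>q. mpow N A q i l / of_nat (fact q) * z ^ q) * C l j)"
    by (simp add: mmul_def mexp_series)
  also have "\<dots> = (\<Sum>q. \<Sum>l<N. mpow N A q i l / of_nat (fact q) * z ^ q * C l j)"
    by (rule mmul_series_left) (rule ser_summable[OF assms])
  also have "\<dots> = (\<Sum>q. mmul N (mpow N A q) C i j / of_nat (fact q) * z ^ q)"
    by (intro suminf_cong) (simp add: mmul_def sum_distrib_right sum_divide_distrib divide_inverse sum_distrib_left ac_simps)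
  finally show ?thesis .
qed

lemma mmul_mexp:
  shows "mmul N C (mexp N (\<lambda>a b. z * A a b)) i j = (\<Sum>q. mmul N C (mpow N A q) i j / of_nat (fact q) * z ^ q)"
proof -
  have "mmul N C (mexp N (\<lambda>a b. z * A a b)) i j
      = (\<Sum>l<N. C i l * (\<Sum>q. mpow N A q l j / of_nat (fact q) * z ^ q))"
    by (simp add: mmul_def mexp_series)
  also have "\<dots> = (\<Sum>q. \<Sum>l<N. C i l * (mpow N A q l j / of_nat (fact q) * z ^ q))"
    by (rule mmul_series_right) (rule ser_summable)
  also have "\<dots> = (\<Sum>q. mmul N C (mpow N A q) i j / of_nat (fact q) * z ^ q)"
    by (intro suminf_cong) (simp add: mmul_def sum_distrib_right sum_divide_distrib divide_inverse sum_distrib_left ac_simps)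
  finally show ?thesis .
qed

lemma mexp_comm:
  assumes "mcomm N A C" "i < N" "j < N"
  shows "mmul N (mexp N (\<lambda>a b. z * A a b)) C i j = mmul N C (mexp N (\<lambda>a b. z * A a b)) i j"
  unfolding mexp_mmul[OF assms(2)] mmul_mexp
  using mcomm_mpow[OF assms(1)] assms(2,3) by (simp add: mcomm_def meq_def)

lemma mexp_zero: "mexp N (\<lambda>a b. 0 * A a b) i j = mid i j"
proof -
  have "mexp N (\<lambda>a b. 0 * A a b) i j = (\<Sum>q. if q = 0 then mid i j else 0)"
    unfolding mexp_series by (intro suminf_cong) simp
  also have "\<dots> = mid i j" using sums_single[of 0 "\<lambda>_. mid i j"] by (simp add: sums_iff)
  finally show ?thesis .
qed

lemma mexp_DERIV:
  assumes "i < N"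
  shows "((\<lambda>x. mexp N (\<lambda>a b. x * A a b) i j) has_field_derivative mmul N A (mexp N (\<lambda>a b. x * A a b)) i j) (at x)"
proof -
  define c where "c q = mpow N A q i j / of_nat (fact q)" for q
  have f: "(\<lambda>x. mexp N (\<lambda>a b. x * A a b) i j) = (\<lambda>x. \<Sum>q. c q * x ^ q)"
    by (simp add: mexp_series c_def)
  have "DERIV (\<lambda>x. \<Sum>q. c q * x ^ q) x :> (\<Sum>q. diffs c q * x ^ q)"
  proof (rule termdiffs_strong)
    show "summable (\<lambda>q. c q * (of_real (norm x + 1)) ^ q)"
      unfolding c_def by (rule ser_summable[OF assms])
    show "norm x < norm (of_real (norm x + 1) :: complex)" by simp
  qed
  moreover have "(\<Sum>q. diffs c q * x ^ q) = mmul N A (mexp N (\<lambda>a b. x * A a b)) i j"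
  proof -
    have "diffs c q = mpow N A (Suc q) i j / of_nat (fact q)" for q
    proof -
      have s: "(of_nat (Suc q) :: complex) \<noteq> 0" by (rule of_nat_neq_0)
      have f: "(of_nat (fact q) :: complex) \<noteq> 0" by simp
      have h: "(of_nat (fact (Suc q)) :: complex) = of_nat (Suc q) * of_nat (fact q)"
        by (simp only: fact_Suc of_nat_mult of_nat_id)
      have "diffs c q = of_nat (Suc q) * (mpow N A (Suc q) i j / (of_nat (Suc q) * of_nat (fact q)))"
        unfolding diffs_def c_def h ..
      also have "\<dots> = mpow N A (Suc q) i j / of_nat (fact q)" using s f by simp
      finally show ?thesis by simp
    qed
    then have "(\<Sum>q. diffs c q * x ^ q) = (\<Sum>q. mmul N A (mpow N A q) i j / of_nat (fact q) * x ^ q)"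
      by simp
    also have "\<dots> = mmul N A (mexp N (\<lambda>a b. x * A a b)) i j" by (rule mmul_mexp[symmetric])
    finally show ?thesis .
  qed
  ultimately show ?thesis unfolding f by simp
qed

lemma mexp_vderiv:
  assumes "i < N"
  shows "((\<lambda>t. mexp N (\<lambda>a b. of_real t * A a b) i j) has_vector_derivative
           mmul N A (mexp N (\<lambda>a b. of_real t * A a b)) i j) (at t within S)"
  by (rule has_vector_derivative_real_field[where f = "\<lambda>x. mexp N (\<lambda>a b. x * A a b) i j"])
     (rule mexp_DERIV[OF assms])



lemma mmul_vderiv:
  fixes P Q :: "real \<Rightarrow> nat \<Rightarrow> nat \<Rightarrow> complex"
  assumes "\<And>l. l < N \<Longrightarrow> ((\<lambda>s. P s i l) has_vector_derivative P' l) (at t within S)"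
      and "\<And>l. l < N \<Longrightarrow> ((\<lambda>s. Q s l j) has_vector_derivative Q' l) (at t within S)"
  shows "((\<lambda>s. mmul N (P s) (Q s) i j) has_vector_derivative
          (\<Sum>l<N. P' l * Q t l j) + (\<Sum>l<N. P t i l * Q' l)) (at t within S)"
proof -
  have "((\<lambda>s. \<Sum>l<N. P s i l * Q s l j) has_vector_derivative
          (\<Sum>l<N. P t i l * Q' l + P' l * Q t l j)) (at t within S)"
    by (intro has_vector_derivative_sum has_vector_derivative_mult assms) auto
  moreover have "(\<Sum>l<N. P t i l * Q' l + P' l * Q t l j) = (\<Sum>l<N. P' l * Q t l j) + (\<Sum>l<N. P t i l * Q' l)"
    by (simp add: sum.distrib)
  ultimately show ?thesis by (simp add: mmul_def)
qed

lemma vderiv_const: "((\<lambda>s. c) has_vector_derivative 0) (at t within S)"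
  by (rule has_vector_derivative_const)

lemma zero_deriv_const:
  fixes f :: "real \<Rightarrow> complex"
  assumes "convex S" "\<And>t. t \<in> S \<Longrightarrow> (f has_vector_derivative 0) (at t within S)" "a \<in> S" "b \<in> S"
  shows "f a = f b"
proof -
  obtain c where "\<And>x. x \<in> S \<Longrightarrow> f x = c"
    using has_vector_derivative_zero_constant[OF assms(1,2)] by blast
  then show ?thesis using assms(3,4) by simp
qed

abbreviation MEx :: "nat \<Rightarrow> (nat \<Rightarrow> nat \<Rightarrow> complex) \<Rightarrow> real \<Rightarrow> nat \<Rightarrow> nat \<Rightarrow> complex" where
  "MEx N A t \<equiv> mexp N (\<lambda>a b. of_real t * A a b)"

lemma MEx_deriv:
  assumes "i < N"
  shows "((\<lambda>s. MEx N A s i j) has_vector_derivative mmul N A (MEx N A t) i j) (at t within S)"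
  by (rule mexp_vderiv[OF assms])

lemma mcomm_neg: "mcomm N A C \<Longrightarrow> mcomm N (\<lambda>a b. - A a b) C"
  by (auto simp: mcomm_def meq_def mmul_neg_left mmul_def sum_negf)

lemma MEx_comm:
  assumes "mcomm N A C" "i < N" "j < N"
  shows "mmul N (MEx N A t) C i j = mmul N C (MEx N A t) i j"
  by (rule mexp_comm[OF assms])

lemma MEx_0: "MEx N A 0 i j = mid i j"
  using mexp_zero[of N A i j] by simp

lemma mexp_zero_fun: "mexp N (\<lambda>a b. 0) = mid"
  using mexp_zero[of N "\<lambda>a b. 0"] by (intro ext) simp

lemma MEx_inv:
  assumes "i < N" "j < N"
  shows "mmul N (MEx N (\<lambda>a b. - A a b) t) (MEx N A t) i j = mid i j"
proof -
  let ?F = "MEx N (\<lambda>a b. - A a b)" and ?G = "MEx N A"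
  have d: "((\<lambda>s. mmul N (?F s) (?G s) i j) has_vector_derivative 0) (at s within UNIV)" for s
  proof -
    have "((\<lambda>s. mmul N (?F s) (?G s) i j) has_vector_derivative
          (\<Sum>l<N. mmul N (\<lambda>a b. - A a b) (?F s) i l * ?G s l j) + (\<Sum>l<N. ?F s i l * mmul N A (?G s) l j)) (at s within UNIV)"
      by (intro mmul_vderiv MEx_deriv assms) auto
    moreover have "(\<Sum>l<N. mmul N (\<lambda>a b. - A a b) (?F s) i l * ?G s l j) + (\<Sum>l<N. ?F s i l * mmul N A (?G s) l j) = 0"
    proof -
      have "(\<Sum>l<N. ?F s i l * mmul N A (?G s) l j) = mmul N (?F s) (mmul N A (?G s)) i j"
        by (simp only: mmul_def)
      also have "\<dots> = mmul N (mmul N (?F s) A) (?G s) i j"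
        by (simp only: mmul_assoc)
      also have "\<dots> = mmul N (mmul N A (?F s)) (?G s) i j"
        by (rule mmul_cong_left) (rule MEx_comm[OF mcomm_neg[OF mcomm_self]], use assms in auto)
      finally have 1: "(\<Sum>l<N. ?F s i l * mmul N A (?G s) l j) = mmul N (mmul N A (?F s)) (?G s) i j" .
      have 2: "(\<Sum>l<N. mmul N (\<lambda>a b. - A a b) (?F s) i l * ?G s l j) = - mmul N (mmul N A (?F s)) (?G s) i j"
        by (simp add: mmul_def sum_negf[symmetric] sum_distrib_right)
      show ?thesis using 1 2 by simp
    qed
    ultimately show ?thesis by simp
  qed
  have "mmul N (?F t) (?G t) i j = mmul N (?F 0) (?G 0) i j"
    by (rule zero_deriv_const[where S = UNIV]) (use d in auto)
  also have "\<dots> = mmul N mid mid i j" by (simp add: mexp_zero_fun)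
  also have "\<dots> = mid i j" using assms by (simp add: mmul_mid_left)
  finally show ?thesis .
qed



lemma lin_X_unique:
  fixes X :: "real \<Rightarrow> nat \<Rightarrow> nat \<Rightarrow> complex"
  assumes S: "convex S" "0 \<in> S" "t \<in> S"
    and d: "\<And>s i j. s \<in> S \<Longrightarrow> i < N \<Longrightarrow> j < N \<Longrightarrow>
              ((\<lambda>u. X u i j) has_vector_derivative (- mmul N B (X s) i j)) (at s within S)"
    and ij: "i < N" "j < N"
  shows "X t i j = mmul N (MEx N (\<lambda>a b. - B a b) t) (X 0) i j"
proof -
  let ?G = "MEx N B" and ?F = "MEx N (\<lambda>a b. - B a b)"
  have Z: "mmul N (?G t) (X t) i j = X 0 i j" if ijN: "i < N" "j < N" for i j
  proof -
    have dz: "((\<lambda>u. mmul N (?G u) (X u) i j) has_vector_derivative 0) (at s within S)" if s: "s \<in> S" for s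
    proof -
      have "((\<lambda>u. mmul N (?G u) (X u) i j) has_vector_derivative
          (\<Sum>l<N. mmul N B (?G s) i l * X s l j) + (\<Sum>l<N. ?G s i l * - mmul N B (X s) l j)) (at s within S)"
        by (intro mmul_vderiv MEx_deriv d s) (use ijN in auto)
      moreover have "(\<Sum>l<N. mmul N B (?G s) i l * X s l j) + (\<Sum>l<N. ?G s i l * - mmul N B (X s) l j) = 0"
      proof -
        have "(\<Sum>l<N. ?G s i l * - mmul N B (X s) l j) = - mmul N (?G s) (mmul N B (X s)) i j"
          by (simp add: mmul_def sum_negf)
        also have "mmul N (?G s) (mmul N B (X s)) i j = mmul N (mmul N (?G s) B) (X s) i j"
          by (simp only: mmul_assoc)
        also have "\<dots> = mmul N (mmul N B (?G s)) (X s) i j"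
          by (rule mmul_cong_left) (rule MEx_comm[OF mcomm_self], use ijN in auto)
        finally show ?thesis by (simp add: mmul_def)
      qed
      ultimately show ?thesis by simp
    qed
    have "mmul N (?G t) (X t) i j = mmul N (?G 0) (X 0) i j"
      by (rule zero_deriv_const[OF S(1) dz S(3) S(2)])
    also have "\<dots> = X 0 i j" using ijN by (simp add: mexp_zero_fun mmul_mid_left)
    finally show ?thesis .
  qed
  have "X t i j = mmul N mid (X t) i j" using ij by (simp add: mmul_mid_left)
  also have "\<dots> = mmul N (mmul N (?F t) (?G t)) (X t) i j"
    by (rule mmul_cong_left) (use MEx_inv ij in auto)
  also have "\<dots> = mmul N (?F t) (mmul N (?G t) (X t)) i j" by (simp only: mmul_assoc)
  also have "\<dots> = mmul N (?F t) (X 0) i j"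
    by (rule mmul_cong_right) (use Z ij in auto)
  finally show ?thesis .
qed

lemma lin_Y_unique:
  fixes Y :: "real \<Rightarrow> nat \<Rightarrow> nat \<Rightarrow> complex"
  assumes S: "convex S" "0 \<in> S" "t \<in> S"
    and d: "\<And>s i j. s \<in> S \<Longrightarrow> i < N \<Longrightarrow> j < N \<Longrightarrow>
              ((\<lambda>u. Y u i j) has_vector_derivative (mmul N (Y s) B i j)) (at s within S)"
    and ij: "i < N" "j < N"
  shows "Y t i j = mmul N (Y 0) (MEx N B t) i j"
proof -
  let ?G = "MEx N B" and ?F = "MEx N (\<lambda>a b. - B a b)"
  have W: "mmul N (Y t) (?F t) i j = Y 0 i j" if ijN: "i < N" "j < N" for i j
  proof -
    have dz: "((\<lambda>u. mmul N (Y u) (?F u) i j) has_vector_derivative 0) (at s within S)" if s: "s \<in> S" for s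
    proof -
      have "((\<lambda>u. mmul N (Y u) (?F u) i j) has_vector_derivative
          (\<Sum>l<N. mmul N (Y s) B i l * ?F s l j) + (\<Sum>l<N. Y s i l * mmul N (\<lambda>a b. - B a b) (?F s) l j)) (at s within S)"
        by (intro mmul_vderiv MEx_deriv d s) (use ijN in auto)
      moreover have "(\<Sum>l<N. mmul N (Y s) B i l * ?F s l j) + (\<Sum>l<N. Y s i l * mmul N (\<lambda>a b. - B a b) (?F s) l j) = 0"
      proof -
        have "(\<Sum>l<N. Y s i l * mmul N (\<lambda>a b. - B a b) (?F s) l j) = - mmul N (Y s) (mmul N B (?F s)) i j"
          by (simp add: mmul_def sum_negf sum_distrib_left)
        also have "mmul N (Y s) (mmul N B (?F s)) i j = mmul N (mmul N (Y s) B) (?F s) i j"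
          by (simp only: mmul_assoc)
        finally show ?thesis by (simp add: mmul_def)
      qed
      ultimately show ?thesis by simp
    qed
    have "mmul N (Y t) (?F t) i j = mmul N (Y 0) (?F 0) i j"
      by (rule zero_deriv_const[OF S(1) dz S(3) S(2)])
    also have "\<dots> = Y 0 i j" using ijN by (simp add: mexp_zero_fun mmul_mid_right)
    finally show ?thesis .
  qed
  have "Y t i j = mmul N (Y t) mid i j" using ij by (simp add: mmul_mid_right)
  also have "\<dots> = mmul N (Y t) (mmul N (?F t) (?G t)) i j"
    by (rule mmul_cong_right) (use MEx_inv ij in auto)
  also have "\<dots> = mmul N (mmul N (Y t) (?F t)) (?G t) i j" by (simp only: mmul_assoc)
  also have "\<dots> = mmul N (Y 0) (?G t) i j"
    by (rule mmul_cong_left) (use W ij in auto)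
  finally show ?thesis .
qed

lemma X_sol_deriv:
  assumes "i < N"
  shows "((\<lambda>u. mmul N (MEx N (\<lambda>a b. - B a b) u) X0 i j) has_vector_derivative
            - mmul N B (mmul N (MEx N (\<lambda>a b. - B a b) s) X0) i j) (at s within S)"
proof -
  have "((\<lambda>u. mmul N (MEx N (\<lambda>a b. - B a b) u) ((\<lambda>u. X0) u) i j) has_vector_derivative
          (\<Sum>l<N. mmul N (\<lambda>a b. - B a b) (MEx N (\<lambda>a b. - B a b) s) i l * X0 l j) + (\<Sum>l<N. MEx N (\<lambda>a b. - B a b) s i l * 0)) (at s within S)"
    by (intro mmul_vderiv MEx_deriv assms has_vector_derivative_const)
  moreover have "(\<Sum>l<N. mmul N (\<lambda>a b. - B a b) (MEx N (\<lambda>a b. - B a b) s) i l * X0 l j) + (\<Sum>l<N. MEx N (\<lambda>a b. - B a b) s i l * 0)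
      = - mmul N B (mmul N (MEx N (\<lambda>a b. - B a b) s) X0) i j"
  proof -
    have "(\<Sum>l<N. mmul N (\<lambda>a b. - B a b) (MEx N (\<lambda>a b. - B a b) s) i l * X0 l j)
        = - mmul N (mmul N B (MEx N (\<lambda>a b. - B a b) s)) X0 i j"
      by (simp add: mmul_def sum_negf[symmetric] sum_distrib_right)
    then show ?thesis by (simp add: mmul_assoc)
  qed
  ultimately show ?thesis by simp
qed

lemma Y_sol_deriv:
  assumes "j < N"
  shows "((\<lambda>u. mmul N Y0 (MEx N B u) i j) has_vector_derivative
            mmul N (mmul N Y0 (MEx N B s)) B i j) (at s within S)"
proof -
  have "((\<lambda>u. mmul N ((\<lambda>u. Y0) u) (MEx N B u) i j) has_vector_derivative
          (\<Sum>l<N. 0 * MEx N B s l j) + (\<Sum>l<N. Y0 i l * mmul N B (MEx N B s) l j)) (at s within S)"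
    by (intro mmul_vderiv MEx_deriv has_vector_derivative_const) auto
  moreover have "(\<Sum>l<N. 0 * MEx N B s l j) + (\<Sum>l<N. Y0 i l * mmul N B (MEx N B s) l j)
      = mmul N (mmul N Y0 (MEx N B s)) B i j"
  proof -
    have "(\<Sum>l<N. Y0 i l * mmul N B (MEx N B s) l j) = mmul N Y0 (mmul N B (MEx N B s)) i j"
      by (simp only: mmul_def)
    also have "\<dots> = mmul N Y0 (mmul N (MEx N B s) B) i j"
      by (rule mmul_cong_right) (rule MEx_comm[OF mcomm_self, symmetric], use assms in auto)
    finally show ?thesis by (simp add: mmul_assoc)
  qed
  ultimately show ?thesis by simp
qed



definition mdiff :: "nat \<Rightarrow> (complex \<Rightarrow> nat \<Rightarrow> nat \<Rightarrow> complex) \<Rightarrow> (nat \<Rightarrow> nat \<Rightarrow> complex) \<Rightarrow> complex \<Rightarrow> bool" where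
  "mdiff n M M' z \<longleftrightarrow> (\<forall>a<n. \<forall>b<n. ((\<lambda>w. M w a b) has_field_derivative M' a b) (at z))"

lemma mdiff_mmul:
  assumes "mdiff n A A' z" "mdiff n B B' z"
  shows "mdiff n (\<lambda>w. mmul n (A w) (B w)) (\<lambda>a b. mmul n A' (B z) a b + mmul n (A z) B' a b) z"
  unfolding mdiff_def
proof (intro allI impI)
  fix a b assume ab: "a < n" "b < n"
  have "((\<lambda>w. \<Sum>l<n. A w a l * B w l b) has_field_derivative (\<Sum>l<n. A' a l * B z l b + B' l b * A z a l)) (at z)"
    by (intro DERIV_sum DERIV_mult) (use assms ab in \<open>auto simp: mdiff_def\<close>)
  moreover have "(\<Sum>l<n. A' a l * B z l b + B' l b * A z a l) = mmul n A' (B z) a b + mmul n (A z) B' a b"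
    by (simp add: mmul_def sum.distrib mult.commute)
  ultimately show "((\<lambda>w. mmul n (A w) (B w) a b) has_field_derivative mmul n A' (B z) a b + mmul n (A z) B' a b) (at z)"
    by (simp add: mmul_def)
qed

primrec dpow :: "nat \<Rightarrow> (nat \<Rightarrow> nat \<Rightarrow> complex) \<Rightarrow> (nat \<Rightarrow> nat \<Rightarrow> complex) \<Rightarrow> nat \<Rightarrow> nat \<Rightarrow> nat \<Rightarrow> complex" where
  "dpow n M0 M' 0 = (\<lambda>a b. 0)"
| "dpow n M0 M' (Suc q) = (\<lambda>a b. mmul n M' (mpow n M0 q) a b + mmul n M0 (dpow n M0 M' q) a b)"

lemma mdiff_mpow:
  assumes "mdiff n M M' z"
  shows "mdiff n (\<lambda>w. mpow n (M w) q) (dpow n (M z) M' q) z"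
proof (induction q)
  case 0 then show ?case by (simp add: mdiff_def)
next
  case (Suc q)
  show ?case using mdiff_mmul[OF assms Suc] by simp
qed

definition mtr :: "nat \<Rightarrow> (nat \<Rightarrow> nat \<Rightarrow> complex) \<Rightarrow> complex" where
  "mtr n X = (\<Sum>l<n. X l l)"

lemma mtr_cyc: "mtr n (mmul n X Y) = mtr n (mmul n Y X)"
  unfolding mtr_def mmul_def by (subst sum.swap) (simp add: mult.commute)

lemma mtr_meq: "meq n X Y \<Longrightarrow> mtr n X = mtr n Y"
  unfolding mtr_def meq_def by simp

lemma mtr_add: "mtr n (\<lambda>a b. X a b + Y a b) = mtr n X + mtr n Y"
  unfolding mtr_def by (simp add: sum.distrib)

lemma mcomm_mul: "mcomm n C M \<Longrightarrow> mcomm n (mmul n C M) M"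
  unfolding mcomm_def meq_def
proof (intro allI impI)
  fix i j assume c: "\<forall>i<n. \<forall>j<n. mmul n C M i j = mmul n M C i j" and ij: "i < n" "j < n"
  have "mmul n M (mmul n C M) i j = mmul n (mmul n M C) M i j" by (simp only: mmul_assoc)
  also have "\<dots> = mmul n (mmul n C M) M i j" by (rule mmul_cong_left) (use c ij in auto)
  finally show "mmul n (mmul n C M) M i j = mmul n M (mmul n C M) i j" by simp
qed

lemma mtr_dpow:
  assumes "mcomm n C M0"
  shows "mtr n (mmul n C (dpow n M0 M' q)) = of_nat q * mtr n (mmul n C (mmul n (mpow n M0 (q - 1)) M'))"
  using assms
proof (induction q arbitrary: C)
  case 0 then show ?case by (simp add: mtr_def mmul_def)
next
  case (Suc q)
  let ?P = "mpow n M0 q"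
  have split: "mtr n (mmul n C (dpow n M0 M' (Suc q))) = mtr n (mmul n C (mmul n M' ?P)) + mtr n (mmul n C (mmul n M0 (dpow n M0 M' q)))"
  proof -
    have "mmul n C (dpow n M0 M' (Suc q)) = (\<lambda>a b. mmul n C (mmul n M' ?P) a b + mmul n C (mmul n M0 (dpow n M0 M' q)) a b)"
      by (intro ext) (simp add: mmul_add_right)
    then show ?thesis by (simp add: mtr_add)
  qed
  have t1: "mtr n (mmul n C (mmul n M' ?P)) = mtr n (mmul n C (mmul n ?P M'))"
  proof -
    have "mtr n (mmul n C (mmul n M' ?P)) = mtr n (mmul n (mmul n C M') ?P)" by (simp only: mmul_assoc)
    also have "\<dots> = mtr n (mmul n ?P (mmul n C M'))" by (rule mtr_cyc)
    also have "\<dots> = mtr n (mmul n (mmul n ?P C) M')" by (simp only: mmul_assoc)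
    also have "\<dots> = mtr n (mmul n (mmul n C ?P) M')"
    proof (rule mtr_meq)
      have "mcomm n ?P C" by (rule mcomm_mpow[OF mcomm_sym[OF Suc.prems]])
      then show "meq n (mmul n (mmul n ?P C) M') (mmul n (mmul n C ?P) M')"
        unfolding meq_def by (auto intro!: mmul_cong_left simp: mcomm_def meq_def)
    qed
    also have "\<dots> = mtr n (mmul n C (mmul n ?P M'))" by (simp only: mmul_assoc)
    finally show ?thesis .
  qed
  have t2: "mtr n (mmul n C (mmul n M0 (dpow n M0 M' q))) = of_nat q * mtr n (mmul n C (mmul n ?P M'))"
  proof -
    have "mtr n (mmul n C (mmul n M0 (dpow n M0 M' q))) = mtr n (mmul n (mmul n C M0) (dpow n M0 M' q))"
      by (simp only: mmul_assoc)
    also have "\<dots> = of_nat q * mtr n (mmul n (mmul n C M0) (mmul n (mpow n M0 (q - 1)) M'))"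
      by (rule Suc.IH[OF mcomm_mul[OF Suc.prems]])
    also have "\<dots> = of_nat q * mtr n (mmul n C (mmul n ?P M'))"
    proof (cases q)
      case 0 then show ?thesis by simp
    next
      case (Suc q')
      have "mmul n (mmul n C M0) (mmul n (mpow n M0 (q - 1)) M') = mmul n C (mmul n ?P M')"
        using Suc by (simp add: mmul_assoc)
      then show ?thesis by simp
    qed
    finally show ?thesis .
  qed
  show ?case using split t1 t2 by (simp add: algebra_simps)
qed

lemma DERIV_mtr_pow:
  assumes "mdiff n M M' z" "k \<ge> 1"
  shows "((\<lambda>w. (1 / of_nat k) * (\<Sum>l<n. mpow n (M w) k l l)) has_field_derivative
           mtr n (mmul n (mpow n (M z) (k - 1)) M')) (at z)"
proof -
  have "((\<lambda>w. (1 / of_nat k) * (\<Sum>l<n. mpow n (M w) k l l)) has_field_derivative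
           (1 / of_nat k) * (\<Sum>l<n. dpow n (M z) M' k l l)) (at z)"
    by (intro DERIV_cmult DERIV_sum) (use mdiff_mpow[OF assms(1), of k] in \<open>auto simp: mdiff_def\<close>)
  moreover have "(\<Sum>l<n. dpow n (M z) M' k l l) = mtr n (mmul n mid (dpow n (M z) M' k))"
    unfolding mtr_def by (simp add: mmul_mid_left)
  moreover have "mtr n (mmul n mid (dpow n (M z) M' k)) = of_nat k * mtr n (mmul n mid (mmul n (mpow n (M z) (k - 1)) M'))"
    by (rule mtr_dpow) (simp add: mcomm_def meq_def mmul_mid_left mmul_mid_right)
  moreover have "mtr n (mmul n mid (mmul n (mpow n (M z) (k - 1)) M')) = mtr n (mmul n (mpow n (M z) (k - 1)) M')"
    unfolding mtr_def by (simp add: mmul_mid_left)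
  ultimately show ?thesis using assms(2) by simp
qed



definition Pm :: "nat \<Rightarrow> nat \<Rightarrow> nat \<Rightarrow> point \<Rightarrow> nat \<Rightarrow> nat \<Rightarrow> complex" where
  "Pm n r k p = mpow n (Tm n r p) (k - 1)"
definition Am :: "nat \<Rightarrow> nat \<Rightarrow> nat \<Rightarrow> point \<Rightarrow> nat \<Rightarrow> nat \<Rightarrow> complex" where
  "Am n r k p = mmul n (MY p r) (Pm n r k p)"
definition Bmm :: "nat \<Rightarrow> nat \<Rightarrow> nat \<Rightarrow> point \<Rightarrow> nat \<Rightarrow> nat \<Rightarrow> complex" where
  "Bmm n r k p = mmul n (Pm n r k p) (MX p r)"

lemma pdiff_via:
  assumes "r < m" "0 < n" "k \<ge> 1"
    and "mdiff n (\<lambda>z. Tm n r (p(c := z))) M' (p c)"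
  shows "pdiff c (Fham m n r k) p = mtr n (mmul n (Pm n r k p) M')"
proof -
  have f: "(\<lambda>z. Fham m n r k (p(c := z))) = (\<lambda>z. (1 / of_nat k) * (\<Sum>l<n. mpow n (Tm n r (p(c := z))) k l l))"
    by (intro ext) (rule Fham_eq[OF assms(1-3)])
  have "((\<lambda>z. Fham m n r k (p(c := z))) has_field_derivative
          mtr n (mmul n (mpow n (Tm n r (p(c := p c))) (k - 1)) M')) (at (p c))"
    unfolding f by (rule DERIV_mtr_pow[OF assms(4,3)])
  then show ?thesis unfolding pdiff_def Pm_def by (simp add: DERIV_imp_deriv)
qed

lemma deriv_if_lin: "((\<lambda>z. (if C then z else K) * Y) has_field_derivative (if C then 1 else 0) * Y) (at x)"
  by (cases C) (auto intro!: derivative_eq_intros)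

lemma deriv_if_lin2: "((\<lambda>z. Y * (if C then z else K)) has_field_derivative Y * (if C then 1 else 0)) (at x)"
  by (cases C) (auto intro!: derivative_eq_intros)

lemma mdiff_TX:
  assumes "i < n" "j < n"
  shows "mdiff n (\<lambda>z. Tm n r (p(CX r i j := z))) (\<lambda>a b. if a = i then MY p r j b else 0) (p (CX r i j))"
  unfolding mdiff_def
proof (intro allI impI)
  fix a b assume ab: "a < n" "b < n"
  have e: "(\<lambda>z. Tm n r (p(CX r i j := z)) a b) = (\<lambda>z. mid a b + (\<Sum>l<n. (if a = i \<and> l = j then z else p (CX r a l)) * p (CY r l b)))"
    by (intro ext) (auto simp: Tm_def mmul_def MX_def MY_def intro!: sum.cong)
  have d: "((\<lambda>z. mid a b + (\<Sum>l<n. (if a = i \<and> l = j then z else p (CX r a l)) * p (CY r l b))) has_field_derivative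
           0 + (\<Sum>l<n. (if a = i \<and> l = j then 1 else 0) * p (CY r l b))) (at (p (CX r i j)))"
    by (intro DERIV_add DERIV_const DERIV_sum deriv_if_lin)
  have v: "(\<Sum>l<n. (if a = i \<and> l = j then 1 else 0) * p (CY r l b)) = (if a = i then MY p r j b else 0)"
  proof -
    have "(\<Sum>l<n. (if a = i \<and> l = j then 1 else 0) * p (CY r l b)) = (\<Sum>l<n. if l = j then (if a = i then p (CY r l b) else 0) else 0)"
      by (rule sum.cong) auto
    then show ?thesis using assms by (simp add: MY_def)
  qed
  show "((\<lambda>z. Tm n r (p(CX r i j := z)) a b) has_field_derivative (if a = i then MY p r j b else 0)) (at (p (CX r i j)))"
    using d unfolding e v by simp
qed

lemma mdiff_TY:
  assumes "i < n" "j < n"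
  shows "mdiff n (\<lambda>z. Tm n r (p(CY r i j := z))) (\<lambda>a b. if b = j then MX p r a i else 0) (p (CY r i j))"
  unfolding mdiff_def
proof (intro allI impI)
  fix a b assume ab: "a < n" "b < n"
  have e: "(\<lambda>z. Tm n r (p(CY r i j := z)) a b) = (\<lambda>z. mid a b + (\<Sum>l<n. p (CX r a l) * (if l = i \<and> b = j then z else p (CY r l b))))"
    by (intro ext) (auto simp: Tm_def mmul_def MX_def MY_def intro!: sum.cong)
  have d: "((\<lambda>z. mid a b + (\<Sum>l<n. p (CX r a l) * (if l = i \<and> b = j then z else p (CY r l b)))) has_field_derivative
           0 + (\<Sum>l<n. p (CX r a l) * (if l = i \<and> b = j then 1 else 0))) (at (p (CY r i j)))"
    by (intro DERIV_add DERIV_const DERIV_sum deriv_if_lin2)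
  have v: "(\<Sum>l<n. p (CX r a l) * (if l = i \<and> b = j then 1 else 0)) = (if b = j then MX p r a i else 0)"
  proof -
    have "(\<Sum>l<n. p (CX r a l) * (if l = i \<and> b = j then 1 else 0)) = (\<Sum>l<n. if l = i then (if b = j then p (CX r a l) else 0) else 0)"
      by (rule sum.cong) auto
    then show ?thesis using assms by (simp add: MX_def)
  qed
  show "((\<lambda>z. Tm n r (p(CY r i j := z)) a b) has_field_derivative (if b = j then MX p r a i else 0)) (at (p (CY r i j)))"
    using d unfolding e v by simp
qed

lemma pdiff_X:
  assumes "r < m" "0 < n" "k \<ge> 1" "i < n" "j < n"
  shows "pdiff (CX r i j) (Fham m n r k) p = Am n r k p j i"
proof -
  have "pdiff (CX r i j) (Fham m n r k) p = mtr n (mmul n (Pm n r k p) (\<lambda>a b. if a = i then MY p r j b else 0))"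
    by (rule pdiff_via[OF assms(1-3) mdiff_TX[OF assms(4,5)]])
  also have "\<dots> = (\<Sum>l<n. Pm n r k p l i * MY p r j l)"
    unfolding mtr_def mmul_def
  proof (rule sum.cong[OF refl])
    fix l
    have "(\<Sum>a<n. Pm n r k p l a * (if a = i then MY p r j l else 0)) = (\<Sum>a<n. if a = i then Pm n r k p l a * MY p r j l else 0)"
      by (rule sum.cong) auto
    then show "(\<Sum>a<n. Pm n r k p l a * (if a = i then MY p r j l else 0)) = Pm n r k p l i * MY p r j l"
      using assms(4) by simp
  qed
  also have "\<dots> = Am n r k p j i" by (simp add: Am_def mmul_def mult.commute)
  finally show ?thesis .
qed

lemma pdiff_Y:
  assumes "r < m" "0 < n" "k \<ge> 1" "i < n" "j < n"
  shows "pdiff (CY r i j) (Fham m n r k) p = Bmm n r k p j i"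
proof -
  have "pdiff (CY r i j) (Fham m n r k) p = mtr n (mmul n (Pm n r k p) (\<lambda>a b. if b = j then MX p r a i else 0))"
    by (rule pdiff_via[OF assms(1-3) mdiff_TY[OF assms(4,5)]])
  also have "\<dots> = (\<Sum>l<n. if l = j then (\<Sum>a<n. Pm n r k p l a * MX p r a i) else 0)"
    unfolding mtr_def mmul_def by (rule sum.cong) auto
  also have "\<dots> = Bmm n r k p j i" using assms(5) by (simp add: Bmm_def mmul_def)
  finally show ?thesis .
qed

lemma pdiff_other:
  assumes "\<And>a b. c \<noteq> CX r a b" "\<And>a b. c \<noteq> CY r a b"
  shows "pdiff c (Fham m n r k) p = 0"
proof -
  have X: "\<And>a b. CX r a b \<noteq> c" and Y: "\<And>a b. CY r a b \<noteq> c" using assms by metis+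
  have "Tbig n (p(c := z)) r = Tbig n p r" for z
    by (intro ext) (simp add: Tbig_def mmul_def MX_def MY_def X Y)
  then have "(\<lambda>z. Fham m n r k (p(c := z))) = (\<lambda>z. Fham m n r k p)"
    by (intro ext) (simp add: Fham_def)
  then show ?thesis unfolding pdiff_def by (simp add: DERIV_imp_deriv)
qed



lemma coords_finite: "finite (coords m n d)"
proof -
  have 1: "{CX s i j | s i j. s < m \<and> i < n \<and> j < n} \<subseteq> (\<lambda>(s,i,j). CX s i j) ` ({..<m} \<times> {..<n} \<times> {..<n})" by (auto simp: image_iff)
  have 2: "{CY s i j | s i j. s < m \<and> i < n \<and> j < n} \<subseteq> (\<lambda>(s,i,j). CY s i j) ` ({..<m} \<times> {..<n} \<times> {..<n})" by (auto simp: image_iff)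
  have 3: "{CV s a j | s a j. s < m \<and> 1 \<le> a \<and> a \<le> d s \<and> j < n} \<subseteq> (\<lambda>(s,a,j). CV s a j) ` ({..<m} \<times> {..(\<Sum>s<m. d s)} \<times> {..<n})"
  proof
    fix x assume "x \<in> {CV s a j | s a j. s < m \<and> 1 \<le> a \<and> a \<le> d s \<and> j < n}"
    then obtain s a j where x: "x = CV s a j" "s < m" "a \<le> d s" "j < n" by auto
    have "d s \<le> (\<Sum>s<m. d s)" using x(2) by (intro member_le_sum) auto
    then show "x \<in> (\<lambda>(s,a,j). CV s a j) ` ({..<m} \<times> {..(\<Sum>s<m. d s)} \<times> {..<n})"
      using x by (auto intro!: image_eqI[where x = "(s,a,j)"])
  qed
  have 4: "{CW s a j | s a j. s < m \<and> 1 \<le> a \<and> a \<le> d s \<and> j < n} \<subseteq> (\<lambda>(s,a,j). CW s a j) ` ({..<m} \<times> {..(\<Sum>s<m. d s)} \<times> {..<n})"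
  proof
    fix x assume "x \<in> {CW s a j | s a j. s < m \<and> 1 \<le> a \<and> a \<le> d s \<and> j < n}"
    then obtain s a j where x: "x = CW s a j" "s < m" "a \<le> d s" "j < n" by auto
    have "d s \<le> (\<Sum>s<m. d s)" using x(2) by (intro member_le_sum) auto
    then show "x \<in> (\<lambda>(s,a,j). CW s a j) ` ({..<m} \<times> {..(\<Sum>s<m. d s)} \<times> {..<n})"
      using x by (auto intro!: image_eqI[where x = "(s,a,j)"])
  qed
  show ?thesis unfolding coords_def
    by (intro finite_UnI finite_subset[OF 1] finite_subset[OF 2] finite_subset[OF 3] finite_subset[OF 4] finite_imageI) auto
qed

lemma sum_grid:
  fixes g :: "coord \<Rightarrow> complex"
  assumes "\<And>i j i' j'. C i j = C i' j' \<Longrightarrow> i = i' \<and> j = j'"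
  shows "sum g ((\<lambda>(i,j). C i j) ` ({..<n} \<times> {..<n})) = (\<Sum>i<n. \<Sum>j<n. g (C i j))"
proof -
  have inj: "inj_on (\<lambda>(i,j). C i j) ({..<n} \<times> {..<n})"
    using assms by (auto simp: inj_on_def)
  have "sum g ((\<lambda>(i,j). C i j) ` ({..<n} \<times> {..<n})) = (\<Sum>x\<in>{..<n} \<times> {..<n}. g (case x of (i,j) \<Rightarrow> C i j))"
    by (subst sum.reindex[OF inj]) (simp add: o_def)
  also have "\<dots> = (\<Sum>x\<in>{..<n} \<times> {..<n}. (\<lambda>i j. g (C i j)) (fst x) (snd x))"
    by (intro sum.cong refl) (auto split: prod.splits)
  also have "\<dots> = (\<Sum>i<n. \<Sum>j<n. g (C i j))"
    by (simp add: sum.cartesian_product split_def)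
  finally show ?thesis .
qed

lemma ham_reduce:
  assumes "r < m" "0 < n" "k \<ge> 1"
  shows "ham m n d (Fham m n r k) c p
     = (\<Sum>i<n. \<Sum>j<n. Am n r k p j i * br m n (CX r i j) c p)
     + (\<Sum>i<n. \<Sum>j<n. Bmm n r k p j i * br m n (CY r i j) c p)"
proof -
  let ?g = "\<lambda>c'. pdiff c' (Fham m n r k) p * br m n c' c p"
  let ?SX = "(\<lambda>(i,j). CX r i j) ` ({..<n} \<times> {..<n})"
  let ?SY = "(\<lambda>(i,j). CY r i j) ` ({..<n} \<times> {..<n})"
  have sub: "?SX \<union> ?SY \<subseteq> coords m n d" using assms(1) by (auto simp: coords_def)
  have zero: "?g c' = 0" if "c' \<in> coords m n d - (?SX \<union> ?SY)" for c'
  proof -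
    have "\<And>a b. c' \<noteq> CX r a b" "\<And>a b. c' \<noteq> CY r a b"
      using that by (auto simp: coords_def)
    then show ?thesis by (simp add: pdiff_other)
  qed
  have "ham m n d (Fham m n r k) c p = sum ?g (?SX \<union> ?SY)"
    unfolding ham_def
    by (rule sum.mono_neutral_right[OF coords_finite sub]) (use zero in auto)
  also have "\<dots> = sum ?g ?SX + sum ?g ?SY"
    by (rule sum.union_disjoint) auto
  also have "sum ?g ?SX = (\<Sum>i<n. \<Sum>j<n. ?g (CX r i j))"
    by (rule sum_grid) auto
  also have "\<dots> = (\<Sum>i<n. \<Sum>j<n. Am n r k p j i * br m n (CX r i j) c p)"
    by (intro sum.cong refl) (simp add: pdiff_X[OF assms])
  also have "sum ?g ?SY = (\<Sum>i<n. \<Sum>j<n. ?g (CY r i j))"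
    by (rule sum_grid) auto
  also have "\<dots> = (\<Sum>i<n. \<Sum>j<n. Bmm n r k p j i * br m n (CY r i j) c p)"
    by (intro sum.cong refl) (simp add: pdiff_Y[OF assms])
  finally show ?thesis .
qed



definition DS :: "nat \<Rightarrow> (nat \<Rightarrow> nat \<Rightarrow> complex) \<Rightarrow> (nat \<Rightarrow> nat \<Rightarrow> complex) \<Rightarrow> complex" where
  "DS n A f = (\<Sum>i<n. \<Sum>j<n. A j i * f i j)"

lemma DS_add: "DS n A (\<lambda>i j. f i j + g i j) = DS n A f + DS n A g"
  unfolding DS_def by (simp add: distrib_left sum.distrib)
lemma DS_diff: "DS n A (\<lambda>i j. f i j - g i j) = DS n A f - DS n A g"
  unfolding DS_def by (simp add: right_diff_distrib sum_subtractf)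
lemma DS_scal: "DS n A (\<lambda>i j. c * f i j) = c * DS n A f"
  unfolding DS_def by (simp add: sum_distrib_left mult.left_commute)

lemma dl_sum_l: "l < n \<Longrightarrow> (\<Sum>i<n. f i * dl i l) = f l"
proof -
  assume l: "l < n"
  have "(\<Sum>i<n. f i * dl i l) = (\<Sum>i<n. if i = l then f i else 0)" by (rule sum.cong) (auto simp: dl_def)
  then show ?thesis using l by simp
qed

lemma dl_sum_r: "k < n \<Longrightarrow> (\<Sum>j<n. dl k j * f j) = f k"
proof -
  assume k: "k < n"
  have "(\<Sum>j<n. dl k j * f j) = (\<Sum>j<n. if k = j then f j else 0)" by (rule sum.cong) (auto simp: dl_def)
  then show ?thesis using k by simp
qed

lemma P1: "k < n \<Longrightarrow> l < n \<Longrightarrow> DS n A (\<lambda>i j. dl i l * dl k j) = A k l"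
proof -
  assume kl: "k < n" "l < n"
  have "DS n A (\<lambda>i j. dl i l * dl k j) = (\<Sum>i<n. (\<Sum>j<n. dl k j * A j i) * dl i l)"
    unfolding DS_def by (simp add: sum_distrib_right sum_distrib_left ac_simps)
  also have "\<dots> = (\<Sum>j<n. dl k j * A j l)" by (rule dl_sum_l[OF kl(2)])
  also have "\<dots> = A k l" by (rule dl_sum_r[OF kl(1)])
  finally show ?thesis .
qed

lemma P2: "l < n \<Longrightarrow> DS n A (\<lambda>i j. C k j * dl i l) = mmul n C A k l"
proof -
  assume l: "l < n"
  have "DS n A (\<lambda>i j. C k j * dl i l) = (\<Sum>i<n. (\<Sum>j<n. C k j * A j i) * dl i l)"
    unfolding DS_def by (simp add: sum_distrib_right sum_distrib_left ac_simps)
  also have "\<dots> = (\<Sum>j<n. C k j * A j l)" by (rule dl_sum_l[OF l])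
  finally show ?thesis by (simp add: mmul_def)
qed

lemma P3: "k < n \<Longrightarrow> DS n A (\<lambda>i j. dl k j * D i l) = mmul n A D k l"
proof -
  assume k: "k < n"
  have "DS n A (\<lambda>i j. dl k j * D i l) = (\<Sum>i<n. (\<Sum>j<n. dl k j * (A j i * D i l)))"
    unfolding DS_def by (simp add: ac_simps)
  also have "\<dots> = (\<Sum>i<n. A k i * D i l)" by (intro sum.cong refl dl_sum_r[OF k])
  finally show ?thesis by (simp add: mmul_def)
qed

lemma P4: "DS n A (\<lambda>i j. C k j * D i l) = mmul n (mmul n C A) D k l"
  unfolding DS_def mmul_def by (simp add: sum_distrib_right sum_distrib_left ac_simps)

lemma test:
  assumes "k < n" "l < n"
  shows "DS n A (\<lambda>i j. c1 * (mmul n X Y k j * dl i l) + c2 * (dl k j * mmul n Y X i l)) =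
    c1 * mmul n (mmul n X Y) A k l + c2 * mmul n A (mmul n Y X) k l"
  by (simp only: DS_add DS_scal P2 P3 assms)



lemma sucm_lt: "0 < m \<Longrightarrow> sucm m r < m" by (simp add: sucm_def)
lemma predm_lt: "0 < m \<Longrightarrow> predm m r < m" by (simp add: predm_def)

lemma predm_sucm: assumes "r < m" shows "predm m (sucm m r) = r"
proof (cases "r + 1 < m")
  case True
  then have "sucm m r = r + 1" by (simp add: sucm_def)
  then have "predm m (sucm m r) = (r + m) mod m" by (simp add: predm_def)
  also have "\<dots> = r" using assms by simp
  finally show ?thesis .
next
  case False
  then have "r + 1 = m" using assms by simp
  then have "sucm m r = 0" by (simp add: sucm_def)
  then show ?thesis using \<open>r + 1 = m\<close> by (simp add: predm_def)
qed

lemma sucm_predm: assumes "s < m" shows "sucm m (predm m s) = s"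
proof (cases "s = 0")
  case True
  then have "predm m s = m - 1" using assms by (simp add: predm_def)
  then show ?thesis using True assms by (simp add: sucm_def)
next
  case False
  then have "predm m s = s - 1" using assms
    by (simp add: predm_def) (metis Nat.add_diff_assoc2 Suc_leI add.commute less_imp_le_nat mod_add_self1 mod_less not_gr_zero less_imp_diff_less One_nat_def)
  then show ?thesis using False assms by (simp add: sucm_def)
qed

lemma predm_iff: assumes "r < m" "s < m" shows "(r = predm m s) = (s = sucm m r)"
  using predm_sucm[OF assms(1)] sucm_predm[OF assms(2)] by metis

lemma sucm_iff: assumes "r < m" "s < m" shows "(r = sucm m s) = (s = predm m r)"
  using predm_iff[OF assms(2,1)] by metis

lemma sucm_neq: assumes "r < m" "2 \<le> m" shows "sucm m r \<noteq> r"
proof (cases "r + 1 < m")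
  case True then show ?thesis by (simp add: sucm_def)
next
  case False
  then have "r + 1 = m" using assms by simp
  then show ?thesis using assms by (simp add: sucm_def)
qed

lemma predm_neq: assumes "r < m" "2 \<le> m" shows "predm m r \<noteq> r"
  using predm_iff[OF assms(1) assms(1)] sucm_neq[OF assms] by metis

lemma dl_same[simp]: "dl a a = 1" by (simp add: dl_def)
lemma dl_neq: "a \<noteq> b \<Longrightarrow> dl a b = 0" by (simp add: dl_def)

lemma Tm_fun: "Tm n r p = (\<lambda>i j. mid i j + mmul n (MX p r) (MY p r) i j)"
  by (intro ext) (simp add: Tm_def)

lemma Pm_comm: "mcomm n (Pm n r k p) (mmul n (MX p r) (MY p r))"
  unfolding Pm_def Tm_fun by (rule mcomm_mpow[OF mcomm_id_plus])

lemma Id1: "mmul n (Am n r k p) (MX p r) = mmul n (MY p r) (Bmm n r k p)"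
  unfolding Am_def Bmm_def by (simp only: mmul_assoc)

lemma Id2: assumes "i < n" "j < n"
  shows "mmul n (MX p r) (Am n r k p) i j = mmul n (Bmm n r k p) (MY p r) i j"
proof -
  have "mmul n (MX p r) (Am n r k p) i j = mmul n (mmul n (MX p r) (MY p r)) (Pm n r k p) i j"
    unfolding Am_def by (simp only: mmul_assoc)
  also have "\<dots> = mmul n (Pm n r k p) (mmul n (MX p r) (MY p r)) i j"
    using Pm_comm assms by (auto simp: mcomm_def meq_def)
  also have "\<dots> = mmul n (Bmm n r k p) (MY p r) i j"
    unfolding Bmm_def by (simp only: mmul_assoc)
  finally show ?thesis .
qed

lemma Id2_meq: "meq n (mmul n (MX p r) (Am n r k p)) (mmul n (Bmm n r k p) (MY p r))"
  using Id2 by (auto simp: meq_def)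

lemma PT: assumes "k \<ge> 1" "i < n" "j < n"
  shows "mmul n (Pm n r k p) (Tm n r p) i j = mpow n (Tm n r p) k i j"
  using mpow_Suc_right[OF assms(2,3), of "Tm n r p" "k - 1"] assms(1) by (simp add: Pm_def)

lemma XT_CX: assumes "k \<ge> 1" "a < n" "b < n"
  shows "Bmm n r k p a b + 1/2 * mmul n (Bmm n r k p) (mmul n (MY p r) (MX p r)) a b
       + 1/2 * mmul n (mmul n (MX p r) (MY p r)) (Bmm n r k p) a b
     = mmul n (mpow n (Tm n r p) k) (MX p r) a b"
proof -
  let ?X = "MX p r" and ?Y = "MY p r" and ?P = "Pm n r k p" and ?B = "Bmm n r k p"
  have e1: "mmul n (mmul n ?X ?Y) ?B a b = mmul n ?B (mmul n ?Y ?X) a b"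
  proof -
    have "mmul n (mmul n ?X ?Y) ?B a b = mmul n (mmul n (mmul n ?X ?Y) ?P) ?X a b"
      unfolding Bmm_def by (simp only: mmul_assoc)
    also have "\<dots> = mmul n (mmul n ?P (mmul n ?X ?Y)) ?X a b"
      by (rule mmul_cong_left) (use Pm_comm assms in \<open>auto simp: mcomm_def meq_def\<close>)
    also have "\<dots> = mmul n ?B (mmul n ?Y ?X) a b"
      unfolding Bmm_def by (simp only: mmul_assoc)
    finally show ?thesis .
  qed
  have "mmul n (mpow n (Tm n r p) k) ?X a b = mmul n (mmul n ?P (Tm n r p)) ?X a b"
    by (rule mmul_cong_left) (use PT assms in auto)
  also have "\<dots> = mmul n ?P (mmul n (Tm n r p) ?X) a b" by (simp only: mmul_assoc)
  also have "\<dots> = mmul n ?P (\<lambda>i j. ?X i j + mmul n (mmul n ?X ?Y) ?X i j) a b"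
    by (rule mmul_cong_right) (simp add: Tm_fun mmul_add_left mmul_mid_left)
  also have "\<dots> = ?B a b + mmul n ?B (mmul n ?Y ?X) a b"
    unfolding mmul_add_right Bmm_def by (simp add: mmul_assoc)
  finally show ?thesis using e1 by simp
qed

lemma YT_CY: assumes "k \<ge> 1" "a < n" "b < n"
  shows "Am n r k p a b + 1/2 * mmul n (mmul n (MY p r) (MX p r)) (Am n r k p) a b
       + 1/2 * mmul n (Am n r k p) (mmul n (MX p r) (MY p r)) a b
     = mmul n (MY p r) (mpow n (Tm n r p) k) a b"
proof -
  let ?X = "MX p r" and ?Y = "MY p r" and ?P = "Pm n r k p" and ?A = "Am n r k p"
  have e1: "mmul n (mmul n ?Y ?X) ?A a b = mmul n ?A (mmul n ?X ?Y) a b"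
  proof -
    have "mmul n (mmul n ?Y ?X) ?A a b = mmul n ?Y (mmul n (mmul n ?X ?Y) ?P) a b"
      unfolding Am_def by (simp only: mmul_assoc)
    also have "\<dots> = mmul n ?Y (mmul n ?P (mmul n ?X ?Y)) a b"
      by (rule mmul_cong_right) (use Pm_comm assms in \<open>auto simp: mcomm_def meq_def\<close>)
    also have "\<dots> = mmul n ?A (mmul n ?X ?Y) a b"
      unfolding Am_def by (simp only: mmul_assoc)
    finally show ?thesis .
  qed
  have "mmul n ?Y (mpow n (Tm n r p) k) a b = mmul n ?Y (mmul n ?P (Tm n r p)) a b"
    by (rule mmul_cong_right) (use PT assms in auto)
  also have "\<dots> = mmul n ?A (Tm n r p) a b" unfolding Am_def by (simp only: mmul_assoc)
  also have "\<dots> = ?A a b + mmul n ?A (mmul n ?X ?Y) a b"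
    using assms by (simp add: Tm_fun mmul_add_right mmul_mid_right)
  finally show ?thesis using e1 by simp
qed



definition wv :: "point \<Rightarrow> nat \<Rightarrow> nat \<Rightarrow> nat \<Rightarrow> nat \<Rightarrow> complex" where "wv p s a = (\<lambda>q l. WW p s a q)"
definition vv :: "point \<Rightarrow> nat \<Rightarrow> nat \<Rightarrow> nat \<Rightarrow> nat \<Rightarrow> complex" where "vv p s a = (\<lambda>k q. VV p s a q)"

lemma ham_CY:
  assumes "r < m" "2 \<le> m" "0 < n" "k \<ge> 1" "s < m" "a < n" "b < n"
  shows "ham m n d (Fham m n r k) (CY s a b) p = (if s = r then mmul n (MY p r) (mpow n (Tm n r p) k) a b else 0)"
proof -
  let ?X = "MX p r" and ?Y = "MY p r" and ?A = "Am n r k p" and ?B = "Bmm n r k p"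
  let ?pr = "predm m r" and ?sr = "sucm m r"
  have eX: "(\<lambda>i j. br m n (CX r i j) (CY s a b) p) = (\<lambda>i j. dl s r * (dl i b * dl a j)
     + (1/2 * dl s r) * (mmul n ?Y ?X a j * dl i b) + (1/2 * dl s r) * (dl a j * mmul n ?X ?Y i b)
     + (-(1/2) * dl s ?pr) * (?X a j * MY p ?pr i b) + (1/2 * dl s ?sr) * (MY p ?sr a j * ?X i b))"
    by (intro ext) (simp add: br_def algebra_simps)
  have SX: "DS n ?A (\<lambda>i j. br m n (CX r i j) (CY s a b) p) = dl s r * ?A a b
     + (1/2 * dl s r) * mmul n (mmul n ?Y ?X) ?A a b + (1/2 * dl s r) * mmul n ?A (mmul n ?X ?Y) a b
     + (-(1/2) * dl s ?pr) * mmul n (mmul n ?X ?A) (MY p ?pr) a b + (1/2 * dl s ?sr) * mmul n (mmul n (MY p ?sr) ?A) ?X a b"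
    unfolding eX by (simp only: DS_add DS_scal, (simp only: P1 assms)?, (simp only: P2 P3 assms)?, (simp only: P4)?)
  have eY: "(\<lambda>i j. br m n (CY r i j) (CY s a b) p) = (\<lambda>i j. (1/2 * dl s ?pr) * (dl a j * mmul n ?Y (MY p ?pr) i b)
     + (-(1/2) * dl s ?sr) * (mmul n (MY p ?sr) ?Y a j * dl i b))"
    by (intro ext) (simp add: br_def algebra_simps)
  have SY: "DS n ?B (\<lambda>i j. br m n (CY r i j) (CY s a b) p) = (1/2 * dl s ?pr) * mmul n ?B (mmul n ?Y (MY p ?pr)) a b
     + (-(1/2) * dl s ?sr) * mmul n (mmul n (MY p ?sr) ?Y) ?B a b"
    unfolding eY by (simp only: DS_add DS_scal, (simp only: P1 assms)?, (simp only: P2 P3 assms)?, (simp only: P4)?)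
  have ham: "ham m n d (Fham m n r k) (CY s a b) p = DS n ?A (\<lambda>i j. br m n (CX r i j) (CY s a b) p) + DS n ?B (\<lambda>i j. br m n (CY r i j) (CY s a b) p)"
    unfolding ham_reduce[OF assms(1,3,4)] DS_def ..
  have e1: "mmul n ?B (mmul n ?Y (MY p ?pr)) a b = mmul n (mmul n ?X ?A) (MY p ?pr) a b"
  proof -
    have "mmul n ?B (mmul n ?Y (MY p ?pr)) a b = mmul n (mmul n ?B ?Y) (MY p ?pr) a b" by (simp only: mmul_assoc)
    also have "\<dots> = mmul n (mmul n ?X ?A) (MY p ?pr) a b"
      by (rule mmul_cong_left) (use Id2 assms in auto)
    finally show ?thesis .
  qed
  have e2: "mmul n (mmul n (MY p ?sr) ?A) ?X a b = mmul n (mmul n (MY p ?sr) ?Y) ?B a b"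
    by (simp only: mmul_assoc Id1)
  show ?thesis
  proof (cases "s = r")
    case True
    have "dl r ?pr = 0" "dl r ?sr = 0" using predm_neq[OF assms(1,2)] sucm_neq[OF assms(1,2)] by (simp_all add: dl_neq)
    then show ?thesis unfolding ham SX SY using True YT_CY[OF assms(4,6,7)] by simp
  next
    case False
    then have "dl s r = 0" by (simp add: dl_neq)
    then show ?thesis unfolding ham SX SY using False e1 e2 by (simp add: algebra_simps)
  qed
qed

lemma ham_CW:
  assumes "r < m" "2 \<le> m" "0 < n" "k \<ge> 1" "s < m" "kk < n"
  shows "ham m n d (Fham m n r k) (CW s a kk) p = 0"
proof -
  let ?X = "MX p r" and ?Y = "MY p r" and ?A = "Am n r k p" and ?B = "Bmm n r k p"
  let ?sr = "sucm m r"
  have eX: "(\<lambda>i j. br m n (CX r i j) (CW s a kk) p) = (\<lambda>i j. (1/2 * dl s ?sr) * (dl kk j * mmul n ?X (wv p ?sr a) i 0)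
     + (-(1/2) * dl r s) * (?X kk j * wv p r a i 0))"
    by (intro ext) (simp add: br_def wv_def mmul_def algebra_simps)
  have SX: "DS n ?A (\<lambda>i j. br m n (CX r i j) (CW s a kk) p) = (1/2 * dl s ?sr) * mmul n ?A (mmul n ?X (wv p ?sr a)) kk 0
     + (-(1/2) * dl r s) * mmul n (mmul n ?X ?A) (wv p r a) kk 0"
    unfolding eX by (simp only: DS_add DS_scal, (simp only: P1 assms)?, (simp only: P2 P3 assms)?, (simp only: P4)?)
  have eY: "(\<lambda>i j. br m n (CY r i j) (CW s a kk) p) = (\<lambda>i j. (1/2 * dl r s) * (dl kk j * mmul n ?Y (wv p r a) i 0)
     + (-(1/2) * dl s ?sr) * (?Y kk j * wv p ?sr a i 0))"
    by (intro ext) (simp add: br_def wv_def mmul_def algebra_simps)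
  have SY: "DS n ?B (\<lambda>i j. br m n (CY r i j) (CW s a kk) p) = (1/2 * dl r s) * mmul n ?B (mmul n ?Y (wv p r a)) kk 0
     + (-(1/2) * dl s ?sr) * mmul n (mmul n ?Y ?B) (wv p ?sr a) kk 0"
    unfolding eY by (simp only: DS_add DS_scal, (simp only: P1 assms)?, (simp only: P2 P3 assms)?, (simp only: P4)?)
  have ham: "ham m n d (Fham m n r k) (CW s a kk) p = DS n ?A (\<lambda>i j. br m n (CX r i j) (CW s a kk) p) + DS n ?B (\<lambda>i j. br m n (CY r i j) (CW s a kk) p)"
    unfolding ham_reduce[OF assms(1,3,4)] DS_def ..
  have e1: "mmul n ?A (mmul n ?X (wv p ?sr a)) kk 0 = mmul n (mmul n ?Y ?B) (wv p ?sr a) kk 0"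
    by (simp only: mmul_assoc[symmetric] Id1)
  have e2: "mmul n ?B (mmul n ?Y (wv p r a)) kk 0 = mmul n (mmul n ?X ?A) (wv p r a) kk 0"
  proof -
    have "mmul n ?B (mmul n ?Y (wv p r a)) kk 0 = mmul n (mmul n ?B ?Y) (wv p r a) kk 0" by (simp only: mmul_assoc)
    also have "\<dots> = mmul n (mmul n ?X ?A) (wv p r a) kk 0"
      by (rule mmul_cong_left) (use Id2 assms in auto)
    finally show ?thesis .
  qed
  show ?thesis unfolding ham SX SY using e1 e2 by (simp add: algebra_simps)
qed

lemma ham_CV:
  assumes "r < m" "2 \<le> m" "0 < n" "k \<ge> 1" "s < m" "l < n"
  shows "ham m n d (Fham m n r k) (CV s a l) p = 0"
proof -
  let ?X = "MX p r" and ?Y = "MY p r" and ?A = "Am n r k p" and ?B = "Bmm n r k p"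
  let ?sr = "sucm m r"
  have eX: "(\<lambda>i j. br m n (CX r i j) (CV s a l) p) = (\<lambda>i j. (1/2 * dl r s) * (mmul n (vv p r a) ?X 0 j * dl i l)
     + (-(1/2) * dl s ?sr) * (vv p ?sr a 0 j * ?X i l))"
    by (intro ext) (simp add: br_def vv_def mmul_def algebra_simps)
  have SX: "DS n ?A (\<lambda>i j. br m n (CX r i j) (CV s a l) p) = (1/2 * dl r s) * mmul n (mmul n (vv p r a) ?X) ?A 0 l
     + (-(1/2) * dl s ?sr) * mmul n (mmul n (vv p ?sr a) ?A) ?X 0 l"
    unfolding eX by (simp only: DS_add DS_scal, (simp only: P1 assms)?, (simp only: P2 P3 assms)?, (simp only: P4)?)
  have eY: "(\<lambda>i j. br m n (CY r i j) (CV s a l) p) = (\<lambda>i j. (1/2 * dl s ?sr) * (mmul n (vv p ?sr a) ?Y 0 j * dl i l)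
     + (-(1/2) * dl r s) * (vv p r a 0 j * ?Y i l))"
    by (intro ext) (simp add: br_def vv_def mmul_def algebra_simps)
  have SY: "DS n ?B (\<lambda>i j. br m n (CY r i j) (CV s a l) p) = (1/2 * dl s ?sr) * mmul n (mmul n (vv p ?sr a) ?Y) ?B 0 l
     + (-(1/2) * dl r s) * mmul n (mmul n (vv p r a) ?B) ?Y 0 l"
    unfolding eY by (simp only: DS_add DS_scal, (simp only: P1 assms)?, (simp only: P2 P3 assms)?, (simp only: P4)?)
  have ham: "ham m n d (Fham m n r k) (CV s a l) p = DS n ?A (\<lambda>i j. br m n (CX r i j) (CV s a l) p) + DS n ?B (\<lambda>i j. br m n (CY r i j) (CV s a l) p)"
    unfolding ham_reduce[OF assms(1,3,4)] DS_def ..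
  have e1: "mmul n (mmul n (vv p r a) ?X) ?A 0 l = mmul n (mmul n (vv p r a) ?B) ?Y 0 l"
  proof -
    have "mmul n (mmul n (vv p r a) ?X) ?A 0 l = mmul n (vv p r a) (mmul n ?X ?A) 0 l" by (simp only: mmul_assoc)
    also have "\<dots> = mmul n (vv p r a) (mmul n ?B ?Y) 0 l"
      by (rule mmul_cong_right) (use Id2 assms in auto)
    also have "\<dots> = mmul n (mmul n (vv p r a) ?B) ?Y 0 l" by (simp only: mmul_assoc)
    finally show ?thesis .
  qed
  have e2: "mmul n (mmul n (vv p ?sr a) ?A) ?X 0 l = mmul n (mmul n (vv p ?sr a) ?Y) ?B 0 l"
    by (simp only: mmul_assoc Id1)
  show ?thesis unfolding ham SX SY using e1 e2 by (simp add: algebra_simps)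
qed

lemma ham_CX:
  assumes "r < m" "2 \<le> m" "0 < n" "k \<ge> 1" "s < m" "a < n" "b < n"
  shows "ham m n d (Fham m n r k) (CX s a b) p = (if s = r then - mmul n (mpow n (Tm n r p) k) (MX p r) a b else 0)"
proof -
  let ?X = "MX p r" and ?Y = "MY p r" and ?A = "Am n r k p" and ?B = "Bmm n r k p"
  let ?pr = "predm m r" and ?sr = "sucm m r"
  let ?ps = "predm m s" and ?ss = "sucm m s"
  have eX: "(\<lambda>i j. br m n (CX r i j) (CX s a b) p) = (\<lambda>i j. (1/2 * dl s ?pr) * (mmul n (MX p ?pr) ?X a j * dl i b)
     + (-(1/2) * dl s ?sr) * (dl a j * mmul n ?X (MX p ?sr) i b))"
    by (intro ext) (simp add: br_def algebra_simps)
  have SX: "DS n ?A (\<lambda>i j. br m n (CX r i j) (CX s a b) p) = (1/2 * dl s ?pr) * mmul n (mmul n (MX p ?pr) ?X) ?A a b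
     + (-(1/2) * dl s ?sr) * mmul n ?A (mmul n ?X (MX p ?sr)) a b"
    unfolding eX by (simp only: DS_add DS_scal, (simp only: P1 assms)?, (simp only: P2 P3 assms)?, (simp only: P4)?)
  have eY: "(\<lambda>i j. br m n (CY r i j) (CX s a b) p) = (\<lambda>i j. (- dl r s) * (dl i b * dl a j)
     + (-(1/2) * dl r s) * (dl a j * mmul n (MY p s) (MX p s) i b)
     + (-(1/2) * dl r s) * (mmul n (MX p s) (MY p s) a j * dl i b)
     + (1/2 * dl r ?ps) * (MY p ?ps a j * MX p s i b)
     + (-(1/2) * dl r ?ss) * (MX p s a j * MY p ?ss i b))"
    by (intro ext) (simp add: br_def algebra_simps)
  have SY: "DS n ?B (\<lambda>i j. br m n (CY r i j) (CX s a b) p) = (- dl r s) * ?B a b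
     + (-(1/2) * dl r s) * mmul n ?B (mmul n (MY p s) (MX p s)) a b
     + (-(1/2) * dl r s) * mmul n (mmul n (MX p s) (MY p s)) ?B a b
     + (1/2 * dl r ?ps) * mmul n (mmul n (MY p ?ps) ?B) (MX p s) a b
     + (-(1/2) * dl r ?ss) * mmul n (mmul n (MX p s) ?B) (MY p ?ss) a b"
    unfolding eY by (simp only: DS_add DS_scal, (simp only: P1 assms)?, (simp only: P2 P3 assms)?, (simp only: P4)?)
  have ham: "ham m n d (Fham m n r k) (CX s a b) p = DS n ?A (\<lambda>i j. br m n (CX r i j) (CX s a b) p) + DS n ?B (\<lambda>i j. br m n (CY r i j) (CX s a b) p)"
    unfolding ham_reduce[OF assms(1,3,4)] DS_def ..
  show ?thesis
  proof (cases "s = r")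
    case True
    have "dl r ?pr = 0" "dl r ?sr = 0" using predm_neq[OF assms(1,2)] sucm_neq[OF assms(1,2)] by (simp_all add: dl_neq)
    then show ?thesis unfolding ham SX SY using True XT_CX[OF assms(4,6,7)]
      by (simp add: algebra_simps)
  next
    case False
    then have dlrs: "dl r s = 0" by (simp add: dl_neq)
    let ?g1 = "(-(1/2) * dl s ?sr) * mmul n ?A (mmul n ?X (MX p ?sr)) a b + (1/2 * dl r ?ps) * mmul n (mmul n (MY p ?ps) ?B) (MX p s) a b"
    let ?g2 = "(1/2 * dl s ?pr) * mmul n (mmul n (MX p ?pr) ?X) ?A a b + (-(1/2) * dl r ?ss) * mmul n (mmul n (MX p s) ?B) (MY p ?ss) a b"
    have g1: "?g1 = 0"
    proof (cases "s = ?sr")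
      case True
      have ps: "?ps = r" using True predm_sucm[OF assms(1)] by simp
      have "mmul n ?A (mmul n ?X (MX p ?sr)) a b = mmul n (mmul n ?Y ?B) (MX p ?sr) a b"
        by (simp only: mmul_assoc[symmetric] Id1)
      then show ?thesis using True ps by simp
    next
      case False
      have "r \<noteq> ?ps" using False predm_iff[OF assms(1,5)] by simp
      then show ?thesis using False by (simp add: dl_neq)
    qed
    have g2: "?g2 = 0"
    proof (cases "s = ?pr")
      case True
      have ss: "?ss = r" using True sucm_predm[OF assms(1)] by simp
      have "mmul n (mmul n (MX p ?pr) ?X) ?A a b = mmul n (mmul n (MX p ?pr) ?B) ?Y a b"
      proof -
        have "mmul n (mmul n (MX p ?pr) ?X) ?A a b = mmul n (MX p ?pr) (mmul n ?X ?A) a b" by (simp only: mmul_assoc)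
        also have "\<dots> = mmul n (MX p ?pr) (mmul n ?B ?Y) a b"
          by (rule mmul_cong_right) (use Id2 assms in auto)
        also have "\<dots> = mmul n (mmul n (MX p ?pr) ?B) ?Y a b" by (simp only: mmul_assoc)
        finally show ?thesis .
      qed
      then show ?thesis using True ss by simp
    next
      case False
      have "r \<noteq> ?ss" using False sucm_iff[OF assms(1,5)] by simp
      then show ?thesis using False by (simp add: dl_neq)
    qed
    have "DS n ?A (\<lambda>i j. br m n (CX r i j) (CX s a b) p) + DS n ?B (\<lambda>i j. br m n (CY r i j) (CX s a b) p) = ?g1 + ?g2"
      unfolding SX SY dlrs by (simp add: algebra_simps)
    then show ?thesis unfolding ham using g1 g2 False by simp
  qed
qed



lemma mpow_meq: "meq n A A' \<Longrightarrow> meq n (mpow n A q) (mpow n A' q)"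
proof (induction q)
  case 0 then show ?case by simp
next
  case (Suc q)
  then show ?case unfolding meq_def by (auto intro!: mmul_meq[unfolded meq_def])
qed

lemma Tk_comm: "mcomm n (mpow n (Tm n r p) k) (mmul n (MX p r) (MY p r))"
  unfolding Tm_fun by (rule mcomm_mpow[OF mcomm_id_plus])

lemma coordsX: "s < m \<Longrightarrow> i < n \<Longrightarrow> j < n \<Longrightarrow> CX s i j \<in> coords m n d" by (auto simp: coords_def)
lemma coordsY: "s < m \<Longrightarrow> i < n \<Longrightarrow> j < n \<Longrightarrow> CY s i j \<in> coords m n d" by (auto simp: coords_def)

lemma T_const:
  assumes basic: "r < m" "2 \<le> m" "0 < n" "k \<ge> 1"
    and I: "convex I" "0 \<in> I" "t \<in> I"
    and flow: "ham_flow_curve m n d (Fham m n r k) I \<gamma>"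
    and init: "\<forall>c\<in>coords m n d. \<gamma> 0 c = p0 c"
  shows "meq n (Tm n r (\<gamma> t)) (Tm n r p0)"
  unfolding meq_def
proof (intro allI impI)
  fix a b assume ab: "a < n" "b < n"
  have dX: "((\<lambda>u. MX (\<gamma> u) r a' l) has_vector_derivative - mmul n (mpow n (Tm n r (\<gamma> s)) k) (MX (\<gamma> s) r) a' l) (at s within I)"
    if "s \<in> I" "a' < n" "l < n" for s a' l
  proof -
    have "((\<lambda>u. \<gamma> u (CX r a' l)) has_vector_derivative ham m n d (Fham m n r k) (CX r a' l) (\<gamma> s)) (at s within I)"
      using flow that basic coordsX unfolding ham_flow_curve_def by blast
    then show ?thesis using ham_CX[OF basic(1-4) basic(1) that(2,3)] by (simp add: MX_def)
  qed
  have dY: "((\<lambda>u. MY (\<gamma> u) r l b') has_vector_derivative mmul n (MY (\<gamma> s) r) (mpow n (Tm n r (\<gamma> s)) k) l b') (at s within I)"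
    if "s \<in> I" "l < n" "b' < n" for s l b'
  proof -
    have "((\<lambda>u. \<gamma> u (CY r l b')) has_vector_derivative ham m n d (Fham m n r k) (CY r l b') (\<gamma> s)) (at s within I)"
      using flow that basic coordsY unfolding ham_flow_curve_def by blast
    then show ?thesis using ham_CY[OF basic(1-4) basic(1) that(2,3)] by (simp add: MY_def)
  qed
  have d0: "((\<lambda>u. Tm n r (\<gamma> u) a b) has_vector_derivative 0) (at s within I)" if s: "s \<in> I" for s
  proof -
    let ?Tk = "mpow n (Tm n r (\<gamma> s)) k" and ?X = "MX (\<gamma> s) r" and ?Y = "MY (\<gamma> s) r"
    have "((\<lambda>u. mmul n (MX (\<gamma> u) r) (MY (\<gamma> u) r) a b) has_vector_derivative
        (\<Sum>l<n. - mmul n ?Tk ?X a l * ?Y l b) + (\<Sum>l<n. ?X a l * mmul n ?Y ?Tk l b)) (at s within I)"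
      by (intro mmul_vderiv dX dY s ab)
    moreover have "(\<Sum>l<n. - mmul n ?Tk ?X a l * ?Y l b) + (\<Sum>l<n. ?X a l * mmul n ?Y ?Tk l b) = 0"
    proof -
      have 1: "(\<Sum>l<n. - mmul n ?Tk ?X a l * ?Y l b) = - mmul n ?Tk (mmul n ?X ?Y) a b"
        by (simp add: mmul_def sum_negf sum_distrib_right sum_distrib_left ac_simps) (rule sum.swap)
      have 2: "(\<Sum>l<n. ?X a l * mmul n ?Y ?Tk l b) = mmul n (mmul n ?X ?Y) ?Tk a b"
      proof -
        have "(\<Sum>l<n. ?X a l * mmul n ?Y ?Tk l b) = mmul n ?X (mmul n ?Y ?Tk) a b"
          by (simp only: mmul_def[of n ?X "mmul n ?Y ?Tk"])
        also have "\<dots> = mmul n (mmul n ?X ?Y) ?Tk a b" by (simp only: mmul_assoc)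
        finally show ?thesis .
      qed
      show ?thesis using 1 2 Tk_comm[of n r "\<gamma> s" k] ab by (simp add: mcomm_def meq_def)
    qed
    ultimately have "((\<lambda>u. mmul n (MX (\<gamma> u) r) (MY (\<gamma> u) r) a b) has_vector_derivative 0) (at s within I)" by simp
    then have "((\<lambda>u. mid a b + mmul n (MX (\<gamma> u) r) (MY (\<gamma> u) r) a b) has_vector_derivative 0 + 0) (at s within I)"
      by (intro has_vector_derivative_add has_vector_derivative_const)
    then show ?thesis by (simp add: Tm_def)
  qed
  have "Tm n r (\<gamma> t) a b = Tm n r (\<gamma> 0) a b"
    by (rule zero_deriv_const[OF I(1) d0 I(3) I(2)])
  also have "\<dots> = Tm n r p0 a b"
    unfolding Tm_def mmul_def MX_def MY_def using init basic coordsX coordsY ab by simp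
  finally show "Tm n r (\<gamma> t) a b = Tm n r p0 a b" .
qed



lemma ham_zero:
  assumes basic: "r < m" "2 \<le> m" "0 < n" "k \<ge> 1"
    and c: "c \<in> coords m n d" "\<forall>i j. c \<noteq> CX r i j" "\<forall>i j. c \<noteq> CY r i j"
  shows "ham m n d (Fham m n r k) c p = 0"
proof -
  from c(1) consider
      (X) s i j where "c = CX s i j" "s < m" "i < n" "j < n"
    | (Y) s i j where "c = CY s i j" "s < m" "i < n" "j < n"
    | (V) s a j where "c = CV s a j" "s < m" "j < n"
    | (W) s a j where "c = CW s a j" "s < m" "j < n"
    unfolding coords_def by blast
  then show ?thesis
  proof cases
    case X then show ?thesis using ham_CX[OF basic X(2-4)] c(2) by auto
  next
    case Y then show ?thesis using ham_CY[OF basic Y(2-4)] c(3) by auto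
  next
    case V then show ?thesis using ham_CV[OF basic V(2-3)] by auto
  next
    case W then show ?thesis using ham_CW[OF basic W(2-3)] by auto
  qed
qed

lemma uniq:
  assumes basic: "r < m" "2 \<le> m" "0 < n" "k \<ge> 1"
    and I: "convex I" "0 \<in> I" "t \<in> I"
    and flow: "ham_flow_curve m n d (Fham m n r k) I \<gamma>"
    and init: "\<forall>c\<in>coords m n d. \<gamma> 0 c = p0 c"
  shows "\<forall>i<n. \<forall>j<n. \<gamma> t (CX r i j) = mmul n (MEx n (\<lambda>a b. - mpow n (Tm n r p0) k a b) t) (MX p0 r) i j"
    and "\<forall>i<n. \<forall>j<n. \<gamma> t (CY r i j) = mmul n (MY p0 r) (MEx n (mpow n (Tm n r p0) k) t) i j"
    and "\<forall>c\<in>coords m n d. (\<forall>i j. c \<noteq> CX r i j) \<longrightarrow> (\<forall>i j. c \<noteq> CY r i j) \<longrightarrow> \<gamma> t c = p0 c"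
proof -
  let ?B = "mpow n (Tm n r p0) k"
  have Tk: "meq n (mpow n (Tm n r (\<gamma> s)) k) ?B" if "s \<in> I" for s
    by (rule mpow_meq[OF T_const[OF basic I(1,2) that flow init]])
  have dX: "((\<lambda>u. MX (\<gamma> u) r i j) has_vector_derivative - mmul n ?B (MX (\<gamma> s) r) i j) (at s within I)"
    if "s \<in> I" "i < n" "j < n" for s i j
  proof -
    have "((\<lambda>u. \<gamma> u (CX r i j)) has_vector_derivative ham m n d (Fham m n r k) (CX r i j) (\<gamma> s)) (at s within I)"
      using flow that basic coordsX unfolding ham_flow_curve_def by blast
    moreover have "mmul n (mpow n (Tm n r (\<gamma> s)) k) (MX (\<gamma> s) r) i j = mmul n ?B (MX (\<gamma> s) r) i j"
      by (rule mmul_meq[OF Tk[OF that(1)] meq_refl that(2,3)])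
    ultimately show ?thesis using ham_CX[OF basic basic(1) that(2,3)] by (simp add: MX_def)
  qed
  have dY: "((\<lambda>u. MY (\<gamma> u) r i j) has_vector_derivative mmul n (MY (\<gamma> s) r) ?B i j) (at s within I)"
    if "s \<in> I" "i < n" "j < n" for s i j
  proof -
    have "((\<lambda>u. \<gamma> u (CY r i j)) has_vector_derivative ham m n d (Fham m n r k) (CY r i j) (\<gamma> s)) (at s within I)"
      using flow that basic coordsY unfolding ham_flow_curve_def by blast
    moreover have "mmul n (MY (\<gamma> s) r) (mpow n (Tm n r (\<gamma> s)) k) i j = mmul n (MY (\<gamma> s) r) ?B i j"
      by (rule mmul_meq[OF meq_refl Tk[OF that(1)] that(2,3)])
    ultimately show ?thesis using ham_CY[OF basic basic(1) that(2,3)] by (simp add: MY_def)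
  qed
  show "\<forall>i<n. \<forall>j<n. \<gamma> t (CX r i j) = mmul n (MEx n (\<lambda>a b. - ?B a b) t) (MX p0 r) i j"
  proof (intro allI impI)
    fix i j assume ij: "i < n" "j < n"
    have "MX (\<gamma> t) r i j = mmul n (MEx n (\<lambda>a b. - ?B a b) t) (MX (\<gamma> 0) r) i j"
      by (rule lin_X_unique[OF I dX ij]) auto
    also have "\<dots> = mmul n (MEx n (\<lambda>a b. - ?B a b) t) (MX p0 r) i j"
      by (rule mmul_cong_right) (use init basic coordsX ij in \<open>auto simp: MX_def\<close>)
    finally show "\<gamma> t (CX r i j) = mmul n (MEx n (\<lambda>a b. - ?B a b) t) (MX p0 r) i j" by (simp add: MX_def)
  qed
  show "\<forall>i<n. \<forall>j<n. \<gamma> t (CY r i j) = mmul n (MY p0 r) (MEx n ?B t) i j"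
  proof (intro allI impI)
    fix i j assume ij: "i < n" "j < n"
    have "MY (\<gamma> t) r i j = mmul n (MY (\<gamma> 0) r) (MEx n ?B t) i j"
      by (rule lin_Y_unique[OF I dY ij]) auto
    also have "\<dots> = mmul n (MY p0 r) (MEx n ?B t) i j"
      by (rule mmul_cong_left) (use init basic coordsY ij in \<open>auto simp: MY_def\<close>)
    finally show "\<gamma> t (CY r i j) = mmul n (MY p0 r) (MEx n ?B t) i j" by (simp add: MY_def)
  qed
  show "\<forall>c\<in>coords m n d. (\<forall>i j. c \<noteq> CX r i j) \<longrightarrow> (\<forall>i j. c \<noteq> CY r i j) \<longrightarrow> \<gamma> t c = p0 c"
  proof (intro ballI impI)
    fix c assume c: "c \<in> coords m n d" "\<forall>i j. c \<noteq> CX r i j" "\<forall>i j. c \<noteq> CY r i j"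
    have d0: "((\<lambda>u. \<gamma> u c) has_vector_derivative 0) (at s within I)" if "s \<in> I" for s
    proof -
      have "((\<lambda>u. \<gamma> u c) has_vector_derivative ham m n d (Fham m n r k) c (\<gamma> s)) (at s within I)"
        using flow that c(1) unfolding ham_flow_curve_def by blast
      then show ?thesis using ham_zero[OF basic c] by simp
    qed
    have "\<gamma> t c = \<gamma> 0 c" by (rule zero_deriv_const[OF I(1) d0 I(3) I(2)])
    then show "\<gamma> t c = p0 c" using init c(1) by simp
  qed
qed



definition gam :: "nat \<Rightarrow> nat \<Rightarrow> nat \<Rightarrow> point \<Rightarrow> real \<Rightarrow> point" where
  "gam n r k p0 t c = (case c of
      CX s i j \<Rightarrow> if s = r then mmul n (MEx n (\<lambda>a b. - mpow n (Tm n r p0) k a b) t) (MX p0 r) i j else p0 c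
    | CY s i j \<Rightarrow> if s = r then mmul n (MY p0 r) (MEx n (mpow n (Tm n r p0) k) t) i j else p0 c
    | CV s a j \<Rightarrow> p0 c
    | CW s a j \<Rightarrow> p0 c)"

lemma MX_gam: "MX (gam n r k p0 t) r = mmul n (MEx n (\<lambda>a b. - mpow n (Tm n r p0) k a b) t) (MX p0 r)"
  by (intro ext) (simp add: MX_def gam_def)

lemma MY_gam: "MY (gam n r k p0 t) r = mmul n (MY p0 r) (MEx n (mpow n (Tm n r p0) k) t)"
  by (intro ext) (simp add: MY_def gam_def)

lemma gam_other: "(\<forall>i j. c \<noteq> CX r i j) \<Longrightarrow> (\<forall>i j. c \<noteq> CY r i j) \<Longrightarrow> gam n r k p0 t c = p0 c"
  by (cases c) (auto simp: gam_def)

lemma MEx_zero_fun: "MEx N A 0 = mid"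
  using mexp_zero_fun[of N] by simp

lemma gam_init:
  assumes "c \<in> coords m n d"
  shows "gam n r k p0 0 c = p0 c"
proof -
  from assms consider
      (X) s i j where "c = CX s i j" "s < m" "i < n" "j < n"
    | (Y) s i j where "c = CY s i j" "s < m" "i < n" "j < n"
    | (V) s a j where "c = CV s a j"
    | (W) s a j where "c = CW s a j"
    unfolding coords_def by blast
  then show ?thesis
  proof cases
    case X then show ?thesis by (simp add: gam_def mexp_zero_fun mmul_mid_left MX_def)
  next
    case Y then show ?thesis by (simp add: gam_def mexp_zero_fun mmul_mid_right MY_def)
  qed (auto simp: gam_def)
qed

lemma gam_T:
  assumes "0 < n"
  shows "meq n (Tm n r (gam n r k p0 t)) (Tm n r p0)"
  unfolding meq_def
proof (intro allI impI)
  fix i j assume ij: "i < n" "j < n"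
  let ?B = "mpow n (Tm n r p0) k"
  let ?F = "MEx n (\<lambda>a b. - ?B a b) t" and ?G = "MEx n ?B t"
  let ?X = "MX p0 r" and ?Y = "MY p0 r"
  have c: "mcomm n (\<lambda>a b. - ?B a b) (mmul n ?X ?Y)" by (rule mcomm_neg[OF Tk_comm])
  have "mmul n (mmul n ?F ?X) (mmul n ?Y ?G) i j = mmul n (mmul n ?F (mmul n ?X ?Y)) ?G i j"
    by (simp only: mmul_assoc)
  also have "\<dots> = mmul n (mmul n (mmul n ?X ?Y) ?F) ?G i j"
    by (rule mmul_cong_left) (use MEx_comm[OF c] ij in auto)
  also have "\<dots> = mmul n (mmul n ?X ?Y) (mmul n ?F ?G) i j" by (simp only: mmul_assoc)
  also have "\<dots> = mmul n (mmul n ?X ?Y) mid i j"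
    by (rule mmul_cong_right) (use MEx_inv ij in auto)
  also have "\<dots> = mmul n ?X ?Y i j" using ij by (simp add: mmul_mid_right)
  finally show "Tm n r (gam n r k p0 t) i j = Tm n r p0 i j"
    by (simp add: Tm_def MX_gam MY_gam)
qed

lemma gam_flow:
  assumes basic: "r < m" "2 \<le> m" "0 < n" "k \<ge> 1"
  shows "ham_flow_curve m n d (Fham m n r k) UNIV (gam n r k p0)"
  unfolding ham_flow_curve_def
proof (intro ballI)
  fix c t assume c: "c \<in> coords m n d" and t: "t \<in> (UNIV :: real set)"
  let ?B = "mpow n (Tm n r p0) k"
  let ?F = "MEx n (\<lambda>a b. - ?B a b)" and ?G = "MEx n ?B"
  have Tk: "meq n (mpow n (Tm n r (gam n r k p0 t)) k) ?B"
    by (rule mpow_meq[OF gam_T[OF basic(3)]])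
  show "((\<lambda>s. gam n r k p0 s c) has_vector_derivative ham m n d (Fham m n r k) c (gam n r k p0 t)) (at t within UNIV)"
  proof (cases "\<exists>i j. c = CX r i j")
    case True
    then obtain i j where cij: "c = CX r i j" by blast
    then have ij: "i < n" "j < n" using c by (auto simp: coords_def)
    have e: "(\<lambda>s. gam n r k p0 s c) = (\<lambda>s. mmul n (?F s) (MX p0 r) i j)" using cij by (simp add: gam_def)
    have "ham m n d (Fham m n r k) c (gam n r k p0 t) = - mmul n (mpow n (Tm n r (gam n r k p0 t)) k) (MX (gam n r k p0 t) r) i j"
      using ham_CX[OF basic basic(1) ij] cij by simp
    also have "\<dots> = - mmul n ?B (mmul n (?F t) (MX p0 r)) i j"
      unfolding MX_gam using mmul_meq[OF Tk meq_refl ij] by simp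
    finally show ?thesis unfolding e by (simp only:) (rule X_sol_deriv[OF ij(1)])
  next
    case notX: False
    show ?thesis
    proof (cases "\<exists>i j. c = CY r i j")
      case True
      then obtain i j where cij: "c = CY r i j" by blast
      then have ij: "i < n" "j < n" using c by (auto simp: coords_def)
      have e: "(\<lambda>s. gam n r k p0 s c) = (\<lambda>s. mmul n (MY p0 r) (?G s) i j)" using cij by (simp add: gam_def)
      have "ham m n d (Fham m n r k) c (gam n r k p0 t) = mmul n (MY (gam n r k p0 t) r) (mpow n (Tm n r (gam n r k p0 t)) k) i j"
        using ham_CY[OF basic basic(1) ij] cij by simp
      also have "\<dots> = mmul n (mmul n (MY p0 r) (?G t)) ?B i j"
        unfolding MY_gam using mmul_meq[OF meq_refl Tk ij] by simp
      finally show ?thesis unfolding e by (simp only:) (rule Y_sol_deriv[OF ij(2)])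
    next
      case False
      then have nX: "\<forall>i j. c \<noteq> CX r i j" and nY: "\<forall>i j. c \<noteq> CY r i j" using notX by auto
      have e: "(\<lambda>s. gam n r k p0 s c) = (\<lambda>s. p0 c)" using gam_other[OF nX nY] by (intro ext) simp
      show ?thesis unfolding e using ham_zero[OF basic c nX nY] by (simp add: has_vector_derivative_const)
    qed
  qed
qed



lemma big_exp_eq:
  assumes "r < m" "0 < n" "k \<ge> 1"
  shows "mexp (n*m) (\<lambda>i j. - complex_of_real t * mpow (n*m) (Tbig n p0 r) k i j)
       = (\<lambda>a b. if a div n = r \<and> b div n = r then MEx n (\<lambda>a b. - mpow n (Tm n r p0) k a b) t (a mod n) (b mod n) else mid a b)"
proof -
  have "(\<lambda>i j. - complex_of_real t * mpow (n*m) (Tbig n p0 r) k i j)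
      = (\<lambda>i j. (- complex_of_real t) * blk n r (mpow n (Tm n r p0) k) i j)"
    by (simp add: Tbig_blk mpow_blk[OF assms])
  also have "\<dots> = blk n r (\<lambda>a b. complex_of_real t * - mpow n (Tm n r p0) k a b)"
    by (subst scal_blk) simp
  finally have e: "(\<lambda>i j. - complex_of_real t * mpow (n*m) (Tbig n p0 r) k i j) = blk n r (\<lambda>a b. complex_of_real t * - mpow n (Tm n r p0) k a b)" .
  show ?thesis unfolding e by (intro ext) (rule mexp_blk[OF assms(1,2)])
qed

lemma big_exp_eq2:
  assumes "r < m" "0 < n" "k \<ge> 1"
  shows "mexp (n*m) (\<lambda>i j. complex_of_real t * mpow (n*m) (Tbig n p0 r) k i j)
       = (\<lambda>a b. if a div n = r \<and> b div n = r then MEx n (mpow n (Tm n r p0) k) t (a mod n) (b mod n) else mid a b)"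
proof -
  have e: "(\<lambda>i j. complex_of_real t * mpow (n*m) (Tbig n p0 r) k i j) = blk n r (\<lambda>a b. complex_of_real t * mpow n (Tm n r p0) k a b)"
    by (simp add: Tbig_blk mpow_blk[OF assms] scal_blk)
  show ?thesis unfolding e by (intro ext) (rule mexp_blk[OF assms(1,2)])
qed

lemma div_lt: "(a::nat) < n * m \<Longrightarrow> a div n < m"
  by (simp add: less_mult_imp_div_less mult.commute)

theorem proposition3p6:
  fixes m n k r :: nat and d :: "nat \<Rightarrow> nat" and p0 :: point
  assumes "m \<ge> 2" and "n \<ge> 1" and "d 0 \<ge> 1"
    and "r < m" and "k \<ge> 1"
    and "Mbullet m n d p0"
  shows "(\<exists>\<gamma>. ham_flow_curve m n d (Fham m n r k) UNIV \<gamma>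
              \<and> (\<forall>c\<in>coords m n d. \<gamma> 0 c = p0 c))
       \<and> (\<forall>I \<gamma>. open I \<and> is_interval I \<and> 0 \<in> I
              \<and> ham_flow_curve m n d (Fham m n r k) I \<gamma>
              \<and> (\<forall>c\<in>coords m n d. \<gamma> 0 c = p0 c)
           \<longrightarrow> (\<forall>t\<in>I.
                 (\<forall>a<n*m. \<forall>b<n*m.
                    Xbig m n (\<gamma> t) a b
                      = mmul (n*m) (mexp (n*m) (\<lambda>i j. - complex_of_real t * mpow (n*m) (Tbig n p0 r) k i j))
                                   (Xbig m n p0) a b
                  \<and> Ybig m n (\<gamma> t) a b
                      = mmul (n*m) (Ybig m n p0)
                                   (mexp (n*m) (\<lambda>i j. complex_of_real t * mpow (n*m) (Tbig n p0 r) k i j)) a b)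
               \<and> (\<forall>s<m. \<forall>\<alpha>. 1 \<le> \<alpha> \<and> \<alpha> \<le> d s \<longrightarrow>
                    (\<forall>j<n. \<gamma> t (CV s \<alpha> j) = p0 (CV s \<alpha> j) \<and> \<gamma> t (CW s \<alpha> j) = p0 (CW s \<alpha> j)))))"
proof -
  have basic: "r < m" "2 \<le> m" "0 < n" "k \<ge> 1" using assms by auto
  have ex: "\<exists>\<gamma>. ham_flow_curve m n d (Fham m n r k) UNIV \<gamma> \<and> (\<forall>c\<in>coords m n d. \<gamma> 0 c = p0 c)"
    using gam_flow[OF basic] gam_init by blast
  have un: "\<forall>t\<in>I.
                 (\<forall>a<n*m. \<forall>b<n*m.
                    Xbig m n (\<gamma> t) a b
                      = mmul (n*m) (mexp (n*m) (\<lambda>i j. - complex_of_real t * mpow (n*m) (Tbig n p0 r) k i j))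
                                   (Xbig m n p0) a b
                  \<and> Ybig m n (\<gamma> t) a b
                      = mmul (n*m) (Ybig m n p0)
                                   (mexp (n*m) (\<lambda>i j. complex_of_real t * mpow (n*m) (Tbig n p0 r) k i j)) a b)
               \<and> (\<forall>s<m. \<forall>\<alpha>. 1 \<le> \<alpha> \<and> \<alpha> \<le> d s \<longrightarrow>
                    (\<forall>j<n. \<gamma> t (CV s \<alpha> j) = p0 (CV s \<alpha> j) \<and> \<gamma> t (CW s \<alpha> j) = p0 (CW s \<alpha> j)))"
    if I: "open I" "is_interval I" "0 \<in> I" and flow: "ham_flow_curve m n d (Fham m n r k) I \<gamma>"
      and init: "\<forall>c\<in>coords m n d. \<gamma> 0 c = p0 c" for I \<gamma>
  proof
    fix t assume t: "t \<in> I"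
    have cI: "convex I" by (rule is_interval_convex[OF I(2)])
    note U = uniq[OF basic cI I(3) t flow init]
    have other: "\<gamma> t c = p0 c" if "c \<in> coords m n d" "\<forall>i j. c \<noteq> CX r i j" "\<forall>i j. c \<noteq> CY r i j" for c
      using U(3) that by blast
    show "(\<forall>a<n*m. \<forall>b<n*m.
                    Xbig m n (\<gamma> t) a b
                      = mmul (n*m) (mexp (n*m) (\<lambda>i j. - complex_of_real t * mpow (n*m) (Tbig n p0 r) k i j))
                                   (Xbig m n p0) a b
                  \<and> Ybig m n (\<gamma> t) a b
                      = mmul (n*m) (Ybig m n p0)
                                   (mexp (n*m) (\<lambda>i j. complex_of_real t * mpow (n*m) (Tbig n p0 r) k i j)) a b)
               \<and> (\<forall>s<m. \<forall>\<alpha>. 1 \<le> \<alpha> \<and> \<alpha> \<le> d s \<longrightarrow>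
                    (\<forall>j<n. \<gamma> t (CV s \<alpha> j) = p0 (CV s \<alpha> j) \<and> \<gamma> t (CW s \<alpha> j) = p0 (CW s \<alpha> j)))"
    proof (intro conjI allI impI)
      fix a b assume ab: "a < n*m" "b < n*m"
      have adm: "a div n < m" "b div n < m" using ab div_lt by auto
      have mods: "a mod n < n" "b mod n < n" using basic by auto
      show "Xbig m n (\<gamma> t) a b = mmul (n*m) (mexp (n*m) (\<lambda>i j. - complex_of_real t * mpow (n*m) (Tbig n p0 r) k i j)) (Xbig m n p0) a b"
      proof -
        have R: "mmul (n*m) (mexp (n*m) (\<lambda>i j. - complex_of_real t * mpow (n*m) (Tbig n p0 r) k i j)) (Xbig m n p0) a b
          = (if a div n = r then (if b div n = (r+1) mod m then mmul n (MEx n (\<lambda>a b. - mpow n (Tm n r p0) k a b) t) (MX p0 r) (a mod n) (b mod n) else 0)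
             else Xbig m n p0 a b)"
          unfolding big_exp_eq[OF basic(1,3,4)] by (rule mmul_E_X[OF basic(1,3) ab(1)])
        show ?thesis
        proof (cases "a div n = r")
          case True
          then show ?thesis unfolding R using U(1) mods by (simp add: Xbig_def)
        next
          case False
          have "\<gamma> t (CX (a div n) (a mod n) (b mod n)) = p0 (CX (a div n) (a mod n) (b mod n))"
            by (rule other) (use False adm mods coordsX in auto)
          then show ?thesis unfolding R using False by (simp add: Xbig_def)
        qed
      qed
      show "Ybig m n (\<gamma> t) a b = mmul (n*m) (Ybig m n p0) (mexp (n*m) (\<lambda>i j. complex_of_real t * mpow (n*m) (Tbig n p0 r) k i j)) a b"
      proof -
        have R: "mmul (n*m) (Ybig m n p0) (mexp (n*m) (\<lambda>i j. complex_of_real t * mpow (n*m) (Tbig n p0 r) k i j)) a b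
          = (if b div n = r then (if a div n = (r+1) mod m then mmul n (MY p0 r) (MEx n (mpow n (Tm n r p0) k) t) (a mod n) (b mod n) else 0)
             else Ybig m n p0 a b)"
          unfolding big_exp_eq2[OF basic(1,3,4)] by (rule mmul_Y_E[OF basic(1,3) ab(2)])
        show ?thesis
        proof (cases "b div n = r")
          case True
          then show ?thesis unfolding R using U(2) mods by (simp add: Ybig_def)
        next
          case False
          have "\<gamma> t (CY (b div n) (a mod n) (b mod n)) = p0 (CY (b div n) (a mod n) (b mod n))"
            by (rule other) (use False adm mods coordsY in auto)
          then show ?thesis unfolding R using False by (simp add: Ybig_def)
        qed
      qed
    next
      fix s \<alpha> j assume s: "s < m" "1 \<le> \<alpha> \<and> \<alpha> \<le> d s" "j < n"
      show "\<gamma> t (CV s \<alpha> j) = p0 (CV s \<alpha> j)"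
        by (rule other) (use s in \<open>auto simp: coords_def\<close>)
      show "\<gamma> t (CW s \<alpha> j) = p0 (CW s \<alpha> j)"
        by (rule other) (use s in \<open>auto simp: coords_def\<close>)
    qed
  qed
  show ?thesis using ex un by blast
qed


end
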